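(* Let $R$ be a von Neumann regular ring with identity, $G$ a group, and $\alpha: G\to\mathrm{Aut}(R)$ an action such that $1$ is the only element $g\in G$ for which $\alpha(g)$ is corner-inner. Then the skew group ring $R*_{\alpha}G$ is simple if and only if $R$ is $G$-simple.
   Context: For $g\in G$, $r\in R$ write ${}^g r=\alpha(g)(r)$. The skew group ring $R*_{\alpha}G$ is the free left $R$-module with basis $G$, with multiplication determined by those of $R$ and $G$ and $g r={}^g r\, g$, extended linearly. An ideal $I$ of $R$ is $G$-invariant if ${}^gI\subseteq I$ for all $g\in G$; $R$ is $G$-simple if $R\ne 0$ and its only $G$-invariant ideals are $0$ and $R$. An automorphism $f$ of $R$ is corner-inner if there exist a nonzero idempotent $e\in R$ and, setting $e'=f^{-1}(e)$, elements $u\in eRe'$ and $v\in e'Re$ such that $uv=e$, $vu=e'$, $f(x)=uxv$ for all $x\in e'Re'$, and $f^{-1}(y)=vyu$ for all $y\in eRe$. *)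

theory Defs
  imports "HOL-Algebra.Algebra"
begin

definition von_neumann_regular :: "('a, 'b) ring_scheme \<Rightarrow> bool" where
  "von_neumann_regular R \<longleftrightarrow> ring R \<and>
     (\<forall>a \<in> carrier R. \<exists>x \<in> carrier R. a \<otimes>\<^bsub>R\<^esub> x \<otimes>\<^bsub>R\<^esub> a = a)"

definition simple_ring :: "('a, 'b) ring_scheme \<Rightarrow> bool" where
  "simple_ring R \<longleftrightarrow> ring R \<and> carrier R \<noteq> {\<zero>\<^bsub>R\<^esub>} \<and>
     (\<forall>I. ideal I R \<longrightarrow> I = {\<zero>\<^bsub>R\<^esub>} \<or> I = carrier R)"

definition ring_action ::
  "('g, 'c) monoid_scheme \<Rightarrow> ('a, 'b) ring_scheme \<Rightarrow> ('g \<Rightarrow> 'a \<Rightarrow> 'a) \<Rightarrow> bool" where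
  "ring_action G R \<alpha> \<longleftrightarrow>
     (\<forall>g \<in> carrier G. \<alpha> g \<in> ring_iso R R) \<and>
     (\<forall>x \<in> carrier R. \<alpha> \<one>\<^bsub>G\<^esub> x = x) \<and>
     (\<forall>g \<in> carrier G. \<forall>h \<in> carrier G. \<forall>x \<in> carrier R.
         \<alpha> (g \<otimes>\<^bsub>G\<^esub> h) x = \<alpha> g (\<alpha> h x))"

definition G_invariant_ideal ::
  "('g, 'c) monoid_scheme \<Rightarrow> ('a, 'b) ring_scheme \<Rightarrow> ('g \<Rightarrow> 'a \<Rightarrow> 'a) \<Rightarrow> 'a set \<Rightarrow> bool" where
  "G_invariant_ideal G R \<alpha> I \<longleftrightarrow> ideal I R \<and> (\<forall>g \<in> carrier G. \<alpha> g ` I \<subseteq> I)"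

definition G_simple ::
  "('g, 'c) monoid_scheme \<Rightarrow> ('a, 'b) ring_scheme \<Rightarrow> ('g \<Rightarrow> 'a \<Rightarrow> 'a) \<Rightarrow> bool" where
  "G_simple G R \<alpha> \<longleftrightarrow> carrier R \<noteq> {\<zero>\<^bsub>R\<^esub>} \<and>
     (\<forall>I. G_invariant_ideal G R \<alpha> I \<longrightarrow> I = {\<zero>\<^bsub>R\<^esub>} \<or> I = carrier R)"

definition corner :: "('a, 'b) ring_scheme \<Rightarrow> 'a \<Rightarrow> 'a \<Rightarrow> 'a set" where
  "corner R e e' = {e \<otimes>\<^bsub>R\<^esub> x \<otimes>\<^bsub>R\<^esub> e' | x. x \<in> carrier R}"

definition corner_inner :: "('a, 'b) ring_scheme \<Rightarrow> ('a \<Rightarrow> 'a) \<Rightarrow> bool" where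
  "corner_inner R f \<longleftrightarrow> f \<in> ring_iso R R \<and>
     (\<exists>e \<in> carrier R. e \<noteq> \<zero>\<^bsub>R\<^esub> \<and> e \<otimes>\<^bsub>R\<^esub> e = e \<and>
        (let e' = inv_into (carrier R) f e in
         \<exists>u \<in> corner R e e'. \<exists>v \<in> corner R e' e.
           u \<otimes>\<^bsub>R\<^esub> v = e \<and> v \<otimes>\<^bsub>R\<^esub> u = e' \<and>
           (\<forall>x \<in> corner R e' e'. f x = u \<otimes>\<^bsub>R\<^esub> x \<otimes>\<^bsub>R\<^esub> v) \<and>
           (\<forall>y \<in> corner R e e. inv_into (carrier R) f y = v \<otimes>\<^bsub>R\<^esub> y \<otimes>\<^bsub>R\<^esub> u)))"

text \<open>Skew group ring R *_alpha G: finitely supported functions G -> R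
  (extensional outside carrier G), an element f standing for
  sum_g f(g) g; multiplication from (r g)(s h) = (r ^g s)(g h).\<close>
definition skew_group_ring ::
  "('a, 'b) ring_scheme \<Rightarrow> ('g, 'c) monoid_scheme \<Rightarrow> ('g \<Rightarrow> 'a \<Rightarrow> 'a) \<Rightarrow> ('g \<Rightarrow> 'a) ring" where
  "skew_group_ring R G \<alpha> =
   \<lparr> carrier = {f \<in> carrier G \<rightarrow>\<^sub>E carrier R. finite {g \<in> carrier G. f g \<noteq> \<zero>\<^bsub>R\<^esub>}},
     monoid.mult = (\<lambda>f h. \<lambda>x \<in> carrier G.
               finsum R (\<lambda>g. f g \<otimes>\<^bsub>R\<^esub> \<alpha> g (h (inv\<^bsub>G\<^esub> g \<otimes>\<^bsub>G\<^esub> x)))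
                        {g \<in> carrier G. f g \<noteq> \<zero>\<^bsub>R\<^esub>}),
     one = (\<lambda>x \<in> carrier G. if x = \<one>\<^bsub>G\<^esub> then \<one>\<^bsub>R\<^esub> else \<zero>\<^bsub>R\<^esub>),
     ring.zero = (\<lambda>x \<in> carrier G. \<zero>\<^bsub>R\<^esub>),
     add = (\<lambda>f h. \<lambda>x \<in> carrier G. f x \<oplus>\<^bsub>R\<^esub> h x) \<rparr>"

end

theory Submission
  imports Defs
begin

locale skew = R?: ring R + G: group G
  for R :: "('a, 'b) ring_scheme" (structure) and G :: "('g, 'c) monoid_scheme"
  + fixes \<alpha> :: "'g \<Rightarrow> 'a \<Rightarrow> 'a"
  assumes act: "ring_action G R \<alpha>"
begin

abbreviation S where "S \<equiv> skew_group_ring R G \<alpha>"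

definition sgsupp :: "('g \<Rightarrow> 'a) \<Rightarrow> 'g set" where
  "sgsupp f = {g \<in> carrier G. f g \<noteq> \<zero>}"

lemma \<alpha>_hom: "g \<in> carrier G \<Longrightarrow> \<alpha> g \<in> ring_hom R R"
  using act unfolding ring_action_def ring_iso_def by auto

lemma \<alpha>_bij: "g \<in> carrier G \<Longrightarrow> bij_betw (\<alpha> g) (carrier R) (carrier R)"
  using act unfolding ring_action_def ring_iso_def by auto

lemma \<alpha>_closed [simp, intro]: "g \<in> carrier G \<Longrightarrow> x \<in> carrier R \<Longrightarrow> \<alpha> g x \<in> carrier R"
  by (rule ring_hom_closed[OF \<alpha>_hom])

lemma \<alpha>_add [simp]: "g \<in> carrier G \<Longrightarrow> x \<in> carrier R \<Longrightarrow> y \<in> carrier R \<Longrightarrow> \<alpha> g (x \<oplus> y) = \<alpha> g x \<oplus> \<alpha> g y"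
  by (rule ring_hom_add[OF \<alpha>_hom])

lemma \<alpha>_mult [simp]: "g \<in> carrier G \<Longrightarrow> x \<in> carrier R \<Longrightarrow> y \<in> carrier R \<Longrightarrow> \<alpha> g (x \<otimes> y) = \<alpha> g x \<otimes> \<alpha> g y"
  by (rule ring_hom_mult[OF \<alpha>_hom])

lemma \<alpha>_one [simp]: "g \<in> carrier G \<Longrightarrow> \<alpha> g \<one> = \<one>"
  by (rule ring_hom_one[OF \<alpha>_hom])

lemma \<alpha>_zero [simp]: "g \<in> carrier G \<Longrightarrow> \<alpha> g \<zero> = \<zero>"
  by (rule ring_hom_zero[OF \<alpha>_hom R.ring_axioms R.ring_axioms])

lemma \<alpha>_unit [simp]: "x \<in> carrier R \<Longrightarrow> \<alpha> \<one>\<^bsub>G\<^esub> x = x"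
  using act unfolding ring_action_def by auto

lemma \<alpha>_comp: "g \<in> carrier G \<Longrightarrow> h \<in> carrier G \<Longrightarrow> x \<in> carrier R \<Longrightarrow> \<alpha> (g \<otimes>\<^bsub>G\<^esub> h) x = \<alpha> g (\<alpha> h x)"
  using act unfolding ring_action_def by auto

lemma \<alpha>_inv1 [simp]: "g \<in> carrier G \<Longrightarrow> x \<in> carrier R \<Longrightarrow> \<alpha> (inv\<^bsub>G\<^esub> g) (\<alpha> g x) = x"
  by (metis G.inv_closed G.l_inv \<alpha>_comp \<alpha>_unit)

lemma \<alpha>_inv2 [simp]: "g \<in> carrier G \<Longrightarrow> x \<in> carrier R \<Longrightarrow> \<alpha> g (\<alpha> (inv\<^bsub>G\<^esub> g) x) = x"
  by (metis G.inv_closed G.r_inv \<alpha>_comp \<alpha>_unit)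

lemma \<alpha>_zero_iff: "g \<in> carrier G \<Longrightarrow> x \<in> carrier R \<Longrightarrow> \<alpha> g x = \<zero> \<longleftrightarrow> x = \<zero>"
  by (metis \<alpha>_inv1 \<alpha>_zero G.inv_closed)

lemma \<alpha>_minus [simp]: "g \<in> carrier G \<Longrightarrow> x \<in> carrier R \<Longrightarrow> \<alpha> g (\<ominus> x) = \<ominus> \<alpha> g x"
  by (metis R.add.inv_closed R.l_neg R.minus_equality \<alpha>_add \<alpha>_closed \<alpha>_zero)

lemma \<alpha>_finsum:
  assumes g: "g \<in> carrier G" and fin: "finite A" and F: "F \<in> A \<rightarrow> carrier R"
  shows "\<alpha> g (finsum R F A) = finsum R (\<lambda>i. \<alpha> g (F i)) A"
  using fin F
proof (induct A rule: finite_induct)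
  case empty then show ?case using g by simp
next
  case (insert a A)
  then have Fa: "F a \<in> carrier R" and FA: "F \<in> A \<rightarrow> carrier R" by auto
  have "\<alpha> g (finsum R F (insert a A)) = \<alpha> g (F a \<oplus> finsum R F A)"
    using insert FA Fa by (simp add: R.finsum_insert)
  also have "\<dots> = \<alpha> g (F a) \<oplus> finsum R (\<lambda>i. \<alpha> g (F i)) A"
    using insert FA Fa g by (simp add: R.finsum_closed)
  also have "\<dots> = finsum R (\<lambda>i. \<alpha> g (F i)) (insert a A)"
    using insert FA Fa g by (subst R.finsum_insert) (auto simp: Pi_def)
  finally show ?case .
qed

lemma finsum_swap:
  assumes "finite A" "finite B" "\<And>i j. i \<in> A \<Longrightarrow> j \<in> B \<Longrightarrow> F i j \<in> carrier R"
  shows "finsum R (\<lambda>i. finsum R (\<lambda>j. F i j) B) A = finsum R (\<lambda>j. finsum R (\<lambda>i. F i j) A) B"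
  using assms
proof (induct A rule: finite_induct)
  case empty then show ?case by (simp add: R.finsum_zero)
next
  case (insert a A)
  have "finsum R (\<lambda>i. finsum R (\<lambda>j. F i j) B) (insert a A)
      = finsum R (\<lambda>j. F a j) B \<oplus> finsum R (\<lambda>i. finsum R (\<lambda>j. F i j) B) A"
    using insert by (subst R.finsum_insert) (auto intro!: R.finsum_closed)
  also have "\<dots> = finsum R (\<lambda>j. F a j) B \<oplus> finsum R (\<lambda>j. finsum R (\<lambda>i. F i j) A) B"
    using insert by simp
  also have "\<dots> = finsum R (\<lambda>j. F a j \<oplus> finsum R (\<lambda>i. F i j) A) B"
    using insert by (subst R.finsum_addf) (auto intro!: R.finsum_closed)
  also have "\<dots> = finsum R (\<lambda>j. finsum R (\<lambda>i. F i j) (insert a A)) B"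
    using insert by (intro R.finsum_cong') (auto intro!: R.finsum_closed simp: R.finsum_insert)
  finally show ?case .
qed

lemma finsum_zero_terms:
  assumes "\<And>i. i \<in> A \<Longrightarrow> F i = \<zero>"
  shows "finsum R F A = \<zero>"
  using assms R.add.finprod_one_eqI by blast

lemma finsum_superset:
  assumes "finite B" "A \<subseteq> B" "\<And>i. i \<in> B - A \<Longrightarrow> F i = \<zero>" "F \<in> B \<rightarrow> carrier R"
  shows "finsum R F A = finsum R F B"
  using R.add.finprod_mono_neutral_cong_left[of B A F F] assms by auto

lemma finsum_single:
  assumes "finite B" "p \<in> B" "\<And>i. i \<in> B \<Longrightarrow> i \<noteq> p \<Longrightarrow> F i = \<zero>" "F p \<in> carrier R"
  shows "finsum R F B = F p"
proof -
  have "finsum R F {p} = finsum R F B"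
    using assms by (intro finsum_superset) (auto simp: Pi_def, metis R.zero_closed)
  then show ?thesis using assms by (simp add: R.finsum_insert)
qed

end

context skew
begin

lemma S_carrier: "carrier S = {f \<in> carrier G \<rightarrow>\<^sub>E carrier R. finite (sgsupp f)}"
  by (simp add: skew_group_ring_def sgsupp_def)

lemma S_mult: "f \<otimes>\<^bsub>S\<^esub> h = (\<lambda>x\<in>carrier G. finsum R (\<lambda>g. f g \<otimes> \<alpha> g (h (inv\<^bsub>G\<^esub> g \<otimes>\<^bsub>G\<^esub> x))) (sgsupp f))"
  by (simp add: skew_group_ring_def sgsupp_def)

lemma S_one: "\<one>\<^bsub>S\<^esub> = (\<lambda>x\<in>carrier G. if x = \<one>\<^bsub>G\<^esub> then \<one> else \<zero>)"
  by (simp add: skew_group_ring_def)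

lemma S_zero: "\<zero>\<^bsub>S\<^esub> = (\<lambda>x\<in>carrier G. \<zero>)"
  by (simp add: skew_group_ring_def)

lemma S_add: "f \<oplus>\<^bsub>S\<^esub> h = (\<lambda>x\<in>carrier G. f x \<oplus> h x)"
  by (simp add: skew_group_ring_def)

lemma supp_sub: "sgsupp f \<subseteq> carrier G"
  by (auto simp: sgsupp_def)

lemma S_memI:
  assumes "f \<in> extensional (carrier G)" "\<And>x. x \<in> carrier G \<Longrightarrow> f x \<in> carrier R" "finite (sgsupp f)"
  shows "f \<in> carrier S"
  using assms by (auto simp: S_carrier PiE_iff)

lemma S_PiE: "f \<in> carrier S \<Longrightarrow> f \<in> carrier G \<rightarrow>\<^sub>E carrier R"
  by (simp add: S_carrier)

lemma S_closed: "f \<in> carrier S \<Longrightarrow> x \<in> carrier G \<Longrightarrow> f x \<in> carrier R"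
  by (drule S_PiE) (erule PiE_mem)

lemma S_closed2: "f \<in> carrier S \<Longrightarrow> g \<in> carrier G \<Longrightarrow> x \<in> carrier G \<Longrightarrow> f (inv\<^bsub>G\<^esub> g \<otimes>\<^bsub>G\<^esub> x) \<in> carrier R"
  by (rule S_closed) simp_all

lemma term_closed: "f \<in> carrier S \<Longrightarrow> h \<in> carrier S \<Longrightarrow> g \<in> carrier G \<Longrightarrow> x \<in> carrier G \<Longrightarrow>
   f g \<otimes> \<alpha> g (h (inv\<^bsub>G\<^esub> g \<otimes>\<^bsub>G\<^esub> x)) \<in> carrier R"
  by (intro R.m_closed \<alpha>_closed S_closed S_closed2) 

lemma S_ext: "f \<in> carrier S \<Longrightarrow> f \<in> extensional (carrier G)"
  by (drule S_PiE) (simp add: PiE_iff)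

lemma S_fin [simp]: "f \<in> carrier S \<Longrightarrow> finite (sgsupp f)"
  by (simp add: S_carrier)

lemma S_eqI:
  assumes f: "f \<in> carrier S" and h: "h \<in> carrier S" and eq: "\<And>x. x \<in> carrier G \<Longrightarrow> f x = h x"
  shows "f = h"
proof -
  have f': "f \<in> carrier G \<rightarrow>\<^sub>E carrier R" using f by (rule S_PiE)
  have h': "h \<in> carrier G \<rightarrow>\<^sub>E carrier R" using h by (rule S_PiE)
  show ?thesis by (rule PiE_ext[OF f' h' eq])
qed

lemma not_supp: "x \<in> carrier G \<Longrightarrow> x \<notin> sgsupp f \<Longrightarrow> f x = \<zero>"
  by (auto simp: sgsupp_def)

lemma mult_eval:
  assumes f: "f \<in> carrier S" and h: "h \<in> carrier S" and x: "x \<in> carrier G"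
    and A: "finite A" "sgsupp f \<subseteq> A" "A \<subseteq> carrier G"
  shows "(f \<otimes>\<^bsub>S\<^esub> h) x = finsum R (\<lambda>g. f g \<otimes> \<alpha> g (h (inv\<^bsub>G\<^esub> g \<otimes>\<^bsub>G\<^esub> x))) A"
proof -
  have "(f \<otimes>\<^bsub>S\<^esub> h) x = finsum R (\<lambda>g. f g \<otimes> \<alpha> g (h (inv\<^bsub>G\<^esub> g \<otimes>\<^bsub>G\<^esub> x))) (sgsupp f)"
    using x by (simp add: S_mult)
  also have "\<dots> = finsum R (\<lambda>g. f g \<otimes> \<alpha> g (h (inv\<^bsub>G\<^esub> g \<otimes>\<^bsub>G\<^esub> x))) A"
  proof (rule finsum_superset)
    fix i assume i: "i \<in> A - sgsupp f"
    then have iG: "i \<in> carrier G" using A by auto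
    have "f i = \<zero>" using iG i not_supp by auto
    moreover have "h (inv\<^bsub>G\<^esub> i \<otimes>\<^bsub>G\<^esub> x) \<in> carrier R" by (rule S_closed[OF h]) (simp add: iG x)
    ultimately show "f i \<otimes> \<alpha> i (h (inv\<^bsub>G\<^esub> i \<otimes>\<^bsub>G\<^esub> x)) = \<zero>"
      using iG by simp
  next
    show "(\<lambda>g. f g \<otimes> \<alpha> g (h (inv\<^bsub>G\<^esub> g \<otimes>\<^bsub>G\<^esub> x))) \<in> A \<rightarrow> carrier R"
      using A x h f by (auto intro!: term_closed)
  qed (use A in auto)
  finally show ?thesis .
qed

lemma supp_mult: 
  assumes f: "f \<in> carrier S" and h: "h \<in> carrier S"
  shows "sgsupp (f \<otimes>\<^bsub>S\<^esub> h) \<subseteq> (\<lambda>(a, b). a \<otimes>\<^bsub>G\<^esub> b) ` (sgsupp f \<times> sgsupp h)"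
proof
  fix x assume "x \<in> sgsupp (f \<otimes>\<^bsub>S\<^esub> h)"
  then have x: "x \<in> carrier G" and nz: "(f \<otimes>\<^bsub>S\<^esub> h) x \<noteq> \<zero>" by (auto simp: sgsupp_def)
  have "\<exists>g \<in> sgsupp f. f g \<otimes> \<alpha> g (h (inv\<^bsub>G\<^esub> g \<otimes>\<^bsub>G\<^esub> x)) \<noteq> \<zero>"
  proof (rule ccontr)
    assume "\<not> ?thesis"
    then have "(f \<otimes>\<^bsub>S\<^esub> h) x = \<zero>" using x by (simp add: S_mult finsum_zero_terms)
    with nz show False by simp
  qed
  then obtain g where g: "g \<in> sgsupp f" and t: "f g \<otimes> \<alpha> g (h (inv\<^bsub>G\<^esub> g \<otimes>\<^bsub>G\<^esub> x)) \<noteq> \<zero>" by blast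
  have gG: "g \<in> carrier G" using g supp_sub by blast
  have "h (inv\<^bsub>G\<^esub> g \<otimes>\<^bsub>G\<^esub> x) \<noteq> \<zero>" using t gG S_closed[OF f gG] by auto
  then have "inv\<^bsub>G\<^esub> g \<otimes>\<^bsub>G\<^esub> x \<in> sgsupp h" using gG x by (auto simp: sgsupp_def)
  moreover have "x = g \<otimes>\<^bsub>G\<^esub> (inv\<^bsub>G\<^esub> g \<otimes>\<^bsub>G\<^esub> x)" using gG x
    by (simp add: G.m_assoc[symmetric] G.r_inv)
  ultimately show "x \<in> (\<lambda>(a, b). a \<otimes>\<^bsub>G\<^esub> b) ` (sgsupp f \<times> sgsupp h)" using g by force
qed

lemma mult_closed [simp, intro]:
  assumes f: "f \<in> carrier S" and h: "h \<in> carrier S"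
  shows "f \<otimes>\<^bsub>S\<^esub> h \<in> carrier S"
proof (rule S_memI)
  show "f \<otimes>\<^bsub>S\<^esub> h \<in> extensional (carrier G)" by (simp add: S_mult)
  show "\<And>x. x \<in> carrier G \<Longrightarrow> (f \<otimes>\<^bsub>S\<^esub> h) x \<in> carrier R"
    using f h supp_sub by (auto simp: S_mult intro!: R.finsum_closed term_closed)
  show "finite (sgsupp (f \<otimes>\<^bsub>S\<^esub> h))"
    using supp_mult[OF f h] f h by (meson S_fin finite_SigmaI finite_imageI finite_subset)
qed

definition monom :: "'a \<Rightarrow> 'g \<Rightarrow> 'g \<Rightarrow> 'a" where
  "monom r k = (\<lambda>x\<in>carrier G. if x = k then r else \<zero>)"

lemma supp_mono: "sgsupp (monom r k) \<subseteq> {k}"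
  by (auto simp: sgsupp_def monom_def)

lemma mono_closed [simp, intro]: "r \<in> carrier R \<Longrightarrow> monom r k \<in> carrier S"
  by (rule S_memI) (auto simp: monom_def sgsupp_def intro: finite_subset[of _ "{k}"])

lemma mono_eval: "x \<in> carrier G \<Longrightarrow> monom r k x = (if x = k then r else \<zero>)"
  by (simp add: monom_def)

lemma mono_left:
  assumes r: "r \<in> carrier R" and k: "k \<in> carrier G" and f: "f \<in> carrier S" and x: "x \<in> carrier G"
  shows "(monom r k \<otimes>\<^bsub>S\<^esub> f) x = r \<otimes> \<alpha> k (f (inv\<^bsub>G\<^esub> k \<otimes>\<^bsub>G\<^esub> x))"
proof -
  have "(monom r k \<otimes>\<^bsub>S\<^esub> f) x = finsum R (\<lambda>g. monom r k g \<otimes> \<alpha> g (f (inv\<^bsub>G\<^esub> g \<otimes>\<^bsub>G\<^esub> x))) {k}"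
    using r k f x supp_mono by (intro mult_eval) auto
  also have "\<dots> = monom r k k \<otimes> \<alpha> k (f (inv\<^bsub>G\<^esub> k \<otimes>\<^bsub>G\<^esub> x))"
    using r k S_closed2[OF f k x] by (intro finsum_single) (auto simp: mono_eval)
  also have "\<dots> = r \<otimes> \<alpha> k (f (inv\<^bsub>G\<^esub> k \<otimes>\<^bsub>G\<^esub> x))"
    using k by (simp add: mono_eval)
  finally show ?thesis .
qed

lemma mono_right:
  assumes d: "d \<in> carrier R" and k: "k \<in> carrier G" and f: "f \<in> carrier S" and x: "x \<in> carrier G"
  shows "(f \<otimes>\<^bsub>S\<^esub> monom d k) x = f (x \<otimes>\<^bsub>G\<^esub> inv\<^bsub>G\<^esub> k) \<otimes> \<alpha> (x \<otimes>\<^bsub>G\<^esub> inv\<^bsub>G\<^esub> k) d"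
proof -
  define p where "p = x \<otimes>\<^bsub>G\<^esub> inv\<^bsub>G\<^esub> k"
  have p: "p \<in> carrier G" using x k by (simp add: p_def)
  have "(f \<otimes>\<^bsub>S\<^esub> monom d k) x = finsum R (\<lambda>g. f g \<otimes> \<alpha> g (monom d k (inv\<^bsub>G\<^esub> g \<otimes>\<^bsub>G\<^esub> x))) (insert p (sgsupp f))"
    using d k f x p supp_sub by (intro mult_eval) auto
  also have "\<dots> = f p \<otimes> \<alpha> p (monom d k (inv\<^bsub>G\<^esub> p \<otimes>\<^bsub>G\<^esub> x))"
  proof (rule finsum_single)
    fix i assume i: "i \<in> insert p (sgsupp f)" "i \<noteq> p"
    then have iG: "i \<in> carrier G" using p supp_sub by auto
    have "inv\<^bsub>G\<^esub> i \<otimes>\<^bsub>G\<^esub> x \<noteq> k"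
    proof
      assume "inv\<^bsub>G\<^esub> i \<otimes>\<^bsub>G\<^esub> x = k"
      then have "x = i \<otimes>\<^bsub>G\<^esub> k" using iG x k
        by (metis G.inv_closed G.inv_inv G.inv_solve_left)
      then have "i = p" unfolding p_def using iG k
        by (simp add: G.m_assoc G.r_inv)
      with i show False by simp
    qed
    then show "f i \<otimes> \<alpha> i (monom d k (inv\<^bsub>G\<^esub> i \<otimes>\<^bsub>G\<^esub> x)) = \<zero>"
      using iG x S_closed[OF f iG] by (simp add: mono_eval)
  qed (use p f d x k S_closed[OF f p] in \<open>auto simp: mono_eval\<close>)
  also have "inv\<^bsub>G\<^esub> p \<otimes>\<^bsub>G\<^esub> x = k" unfolding p_def using x k
    by (simp add: G.inv_mult_group G.m_assoc G.l_inv)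
  finally show ?thesis using k x by (simp add: mono_eval p_def)
qed

end

context skew
begin

lemma add_closed [simp, intro]:
  assumes f: "f \<in> carrier S" and h: "h \<in> carrier S"
  shows "f \<oplus>\<^bsub>S\<^esub> h \<in> carrier S"
proof (rule S_memI)
  show "f \<oplus>\<^bsub>S\<^esub> h \<in> extensional (carrier G)" by (simp add: S_add)
  show "\<And>x. x \<in> carrier G \<Longrightarrow> (f \<oplus>\<^bsub>S\<^esub> h) x \<in> carrier R"
    using S_closed[OF f] S_closed[OF h] by (simp add: S_add)
  have "sgsupp (f \<oplus>\<^bsub>S\<^esub> h) \<subseteq> sgsupp f \<union> sgsupp h"
    by (auto simp: sgsupp_def S_add)
  then show "finite (sgsupp (f \<oplus>\<^bsub>S\<^esub> h))"
    using f h by (meson S_fin finite_UnI finite_subset)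
qed

lemma zero_closed [simp, intro]: "\<zero>\<^bsub>S\<^esub> \<in> carrier S"
  by (rule S_memI) (simp_all add: S_zero sgsupp_def)

lemma one_closed [simp, intro]: "\<one>\<^bsub>S\<^esub> \<in> carrier S"
proof -
  have "\<one>\<^bsub>S\<^esub> = monom \<one> \<one>\<^bsub>G\<^esub>" by (simp add: S_one monom_def)
  then show ?thesis by simp
qed

lemma S_one_mono: "\<one>\<^bsub>S\<^esub> = monom \<one> \<one>\<^bsub>G\<^esub>" by (simp add: S_one monom_def)

lemma S_zero_mono: "\<zero>\<^bsub>S\<^esub> = monom \<zero> k" by (simp add: S_zero monom_def)

lemma neg_closed:
  assumes f: "f \<in> carrier S"
  shows "(\<lambda>x\<in>carrier G. \<ominus> f x) \<in> carrier S"
proof (rule S_memI)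
  show "finite (sgsupp (\<lambda>x\<in>carrier G. \<ominus> f x))"
  proof (rule finite_subset[of _ "sgsupp f"])
    show "sgsupp (\<lambda>x\<in>carrier G. \<ominus> f x) \<subseteq> sgsupp f"
      using f by (auto simp: sgsupp_def)
  qed (use f in simp)
qed (use S_closed[OF f] in auto)

lemma S_abelian_group: "abelian_group S"
proof (rule abelian_groupI)
  fix x y z assume x: "x \<in> carrier S" and y: "y \<in> carrier S" and z: "z \<in> carrier S"
  show "x \<oplus>\<^bsub>S\<^esub> y \<oplus>\<^bsub>S\<^esub> z = x \<oplus>\<^bsub>S\<^esub> (y \<oplus>\<^bsub>S\<^esub> z)"
    by (rule S_eqI[OF add_closed[OF add_closed[OF x y] z] add_closed[OF x add_closed[OF y z]]]) (use x y z S_closed[OF x] S_closed[OF y] S_closed[OF z] in \<open>simp_all add: S_add R.a_assoc\<close>)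
  show "x \<oplus>\<^bsub>S\<^esub> y = y \<oplus>\<^bsub>S\<^esub> x"
    by (rule S_eqI[OF add_closed[OF x y] add_closed[OF y x]]) (use x y S_closed[OF x] S_closed[OF y] in \<open>simp_all add: S_add R.a_comm\<close>)
next
  fix x assume x: "x \<in> carrier S"
  show "\<zero>\<^bsub>S\<^esub> \<oplus>\<^bsub>S\<^esub> x = x"
    by (rule S_eqI[OF add_closed[OF zero_closed x] x]) (use x S_closed[OF x] in \<open>simp_all add: S_add S_zero\<close>)
  show "\<exists>y\<in>carrier S. y \<oplus>\<^bsub>S\<^esub> x = \<zero>\<^bsub>S\<^esub>"
  proof (intro bexI)
    show "(\<lambda>y\<in>carrier G. \<ominus> x y) \<in> carrier S" by (rule neg_closed[OF x])
    show "(\<lambda>y\<in>carrier G. \<ominus> x y) \<oplus>\<^bsub>S\<^esub> x = \<zero>\<^bsub>S\<^esub>"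
      by (rule S_eqI[OF add_closed[OF neg_closed[OF x] x] zero_closed]) (use x neg_closed[OF x] S_closed[OF x] in \<open>simp_all add: S_add S_zero R.l_neg\<close>)
  qed
qed simp_all

lemma l_distr_S:
  assumes f: "f \<in> carrier S" and h: "h \<in> carrier S" and k: "k \<in> carrier S"
  shows "(f \<oplus>\<^bsub>S\<^esub> h) \<otimes>\<^bsub>S\<^esub> k = f \<otimes>\<^bsub>S\<^esub> k \<oplus>\<^bsub>S\<^esub> h \<otimes>\<^bsub>S\<^esub> k"
proof (rule S_eqI)
  fix x assume x: "x \<in> carrier G"
  define A where "A = sgsupp f \<union> sgsupp h"
  have A: "finite A" "A \<subseteq> carrier G" using f h supp_sub by (auto simp: A_def)
  have sA: "sgsupp (f \<oplus>\<^bsub>S\<^esub> h) \<subseteq> A" by (auto simp: A_def sgsupp_def S_add)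
  have "((f \<oplus>\<^bsub>S\<^esub> h) \<otimes>\<^bsub>S\<^esub> k) x = finsum R (\<lambda>g. (f \<oplus>\<^bsub>S\<^esub> h) g \<otimes> \<alpha> g (k (inv\<^bsub>G\<^esub> g \<otimes>\<^bsub>G\<^esub> x))) A"
    by (rule mult_eval) (use f h k x A sA in auto)
  also have "\<dots> = finsum R (\<lambda>g. f g \<otimes> \<alpha> g (k (inv\<^bsub>G\<^esub> g \<otimes>\<^bsub>G\<^esub> x)) \<oplus> h g \<otimes> \<alpha> g (k (inv\<^bsub>G\<^esub> g \<otimes>\<^bsub>G\<^esub> x))) A"
    by (rule R.finsum_cong') (use f h k x A S_closed[OF f] S_closed[OF h] S_closed2[OF k] in \<open>auto simp: S_add R.l_distr\<close>)
  also have "\<dots> = finsum R (\<lambda>g. f g \<otimes> \<alpha> g (k (inv\<^bsub>G\<^esub> g \<otimes>\<^bsub>G\<^esub> x))) A \<oplus> finsum R (\<lambda>g. h g \<otimes> \<alpha> g (k (inv\<^bsub>G\<^esub> g \<otimes>\<^bsub>G\<^esub> x))) A"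
    by (rule R.finsum_addf) (use f h k x A in \<open>auto intro!: term_closed\<close>)
  also have "\<dots> = (f \<otimes>\<^bsub>S\<^esub> k) x \<oplus> (h \<otimes>\<^bsub>S\<^esub> k) x"
    using mult_eval[OF f k x A(1) _ A(2)] mult_eval[OF h k x A(1) _ A(2)] by (simp add: A_def)
  also have "\<dots> = (f \<otimes>\<^bsub>S\<^esub> k \<oplus>\<^bsub>S\<^esub> h \<otimes>\<^bsub>S\<^esub> k) x" using x by (simp add: S_add)
  finally show "((f \<oplus>\<^bsub>S\<^esub> h) \<otimes>\<^bsub>S\<^esub> k) x = (f \<otimes>\<^bsub>S\<^esub> k \<oplus>\<^bsub>S\<^esub> h \<otimes>\<^bsub>S\<^esub> k) x" .
qed (use f h k in auto)

lemma r_distr_S: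
  assumes f: "f \<in> carrier S" and h: "h \<in> carrier S" and k: "k \<in> carrier S"
  shows "k \<otimes>\<^bsub>S\<^esub> (f \<oplus>\<^bsub>S\<^esub> h) = k \<otimes>\<^bsub>S\<^esub> f \<oplus>\<^bsub>S\<^esub> k \<otimes>\<^bsub>S\<^esub> h"
proof (rule S_eqI)
  fix x assume x: "x \<in> carrier G"
  have A: "finite (sgsupp k)" "sgsupp k \<subseteq> carrier G" using k supp_sub by auto
  have "(k \<otimes>\<^bsub>S\<^esub> (f \<oplus>\<^bsub>S\<^esub> h)) x = finsum R (\<lambda>g. k g \<otimes> \<alpha> g ((f \<oplus>\<^bsub>S\<^esub> h) (inv\<^bsub>G\<^esub> g \<otimes>\<^bsub>G\<^esub> x))) (sgsupp k)"
    using x by (simp add: S_mult)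
  also have "\<dots> = finsum R (\<lambda>g. k g \<otimes> \<alpha> g (f (inv\<^bsub>G\<^esub> g \<otimes>\<^bsub>G\<^esub> x)) \<oplus> k g \<otimes> \<alpha> g (h (inv\<^bsub>G\<^esub> g \<otimes>\<^bsub>G\<^esub> x))) (sgsupp k)"
    by (rule R.finsum_cong') (use f h k x A S_closed[OF k] S_closed2[OF f] S_closed2[OF h] in \<open>auto simp: S_add R.r_distr\<close>)
  also have "\<dots> = finsum R (\<lambda>g. k g \<otimes> \<alpha> g (f (inv\<^bsub>G\<^esub> g \<otimes>\<^bsub>G\<^esub> x))) (sgsupp k) \<oplus> finsum R (\<lambda>g. k g \<otimes> \<alpha> g (h (inv\<^bsub>G\<^esub> g \<otimes>\<^bsub>G\<^esub> x))) (sgsupp k)"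
    by (rule R.finsum_addf) (use f h k x A in \<open>auto intro!: term_closed\<close>)
  also have "\<dots> = (k \<otimes>\<^bsub>S\<^esub> f \<oplus>\<^bsub>S\<^esub> k \<otimes>\<^bsub>S\<^esub> h) x" using x by (simp add: S_add S_mult)
  finally show "(k \<otimes>\<^bsub>S\<^esub> (f \<oplus>\<^bsub>S\<^esub> h)) x = (k \<otimes>\<^bsub>S\<^esub> f \<oplus>\<^bsub>S\<^esub> k \<otimes>\<^bsub>S\<^esub> h) x" .
qed (use f h k in auto)

lemma l_one_S: "f \<in> carrier S \<Longrightarrow> \<one>\<^bsub>S\<^esub> \<otimes>\<^bsub>S\<^esub> f = f"
  by (rule S_eqI) (auto simp: S_one_mono mono_left S_closed)

lemma r_one_S: "f \<in> carrier S \<Longrightarrow> f \<otimes>\<^bsub>S\<^esub> \<one>\<^bsub>S\<^esub> = f"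
  by (rule S_eqI) (auto simp: S_one_mono mono_right S_closed)

end

context skew
begin

lemma assoc_S:
  assumes f: "f \<in> carrier S" and h: "h \<in> carrier S" and k: "k \<in> carrier S"
  shows "(f \<otimes>\<^bsub>S\<^esub> h) \<otimes>\<^bsub>S\<^esub> k = f \<otimes>\<^bsub>S\<^esub> (h \<otimes>\<^bsub>S\<^esub> k)"
proof (rule S_eqI[OF mult_closed[OF mult_closed[OF f h] k] mult_closed[OF f mult_closed[OF h k]]])
  fix x assume x: "x \<in> carrier G"
  define P where "P = (\<lambda>(a, b). a \<otimes>\<^bsub>G\<^esub> b) ` (sgsupp f \<times> sgsupp h)"
  have Pfin: "finite P" using f h by (simp add: P_def)
  have PG: "P \<subseteq> carrier G" using supp_sub[of f] supp_sub[of h] by (auto simp: P_def)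
  have sP: "sgsupp (f \<otimes>\<^bsub>S\<^esub> h) \<subseteq> P" unfolding P_def by (rule supp_mult[OF f h])
  have sfG: "\<And>b. b \<in> sgsupp f \<Longrightarrow> b \<in> carrier G" using supp_sub by blast
  have shG: "\<And>b. b \<in> sgsupp h \<Longrightarrow> b \<in> carrier G" using supp_sub by blast
  have fR: "\<And>b. b \<in> carrier G \<Longrightarrow> f b \<in> carrier R" by (rule S_closed[OF f])
  have hR: "\<And>b. b \<in> carrier G \<Longrightarrow> h b \<in> carrier R" by (rule S_closed[OF h])
  have kR: "\<And>b. b \<in> carrier G \<Longrightarrow> k b \<in> carrier R" by (rule S_closed[OF k])
  define T where "T b a = f b \<otimes> \<alpha> b (h (inv\<^bsub>G\<^esub> b \<otimes>\<^bsub>G\<^esub> a)) \<otimes> \<alpha> a (k (inv\<^bsub>G\<^esub> a \<otimes>\<^bsub>G\<^esub> x))" for b a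
  have TR: "\<And>b a. b \<in> carrier G \<Longrightarrow> a \<in> carrier G \<Longrightarrow> T b a \<in> carrier R"
    unfolding T_def using x by (intro R.m_closed \<alpha>_closed fR hR kR) auto
  have "((f \<otimes>\<^bsub>S\<^esub> h) \<otimes>\<^bsub>S\<^esub> k) x = finsum R (\<lambda>a. (f \<otimes>\<^bsub>S\<^esub> h) a \<otimes> \<alpha> a (k (inv\<^bsub>G\<^esub> a \<otimes>\<^bsub>G\<^esub> x))) P"
    by (rule mult_eval[OF mult_closed[OF f h] k x Pfin sP PG])
  also have "\<dots> = finsum R (\<lambda>a. finsum R (\<lambda>b. T b a) (sgsupp f)) P"
  proof (rule R.finsum_cong')
    fix a assume a: "a \<in> P"
    then have aG: "a \<in> carrier G" using PG by blast
    have "(f \<otimes>\<^bsub>S\<^esub> h) a = finsum R (\<lambda>b. f b \<otimes> \<alpha> b (h (inv\<^bsub>G\<^esub> b \<otimes>\<^bsub>G\<^esub> a))) (sgsupp f)"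
      using aG by (simp add: S_mult)
    then show "(f \<otimes>\<^bsub>S\<^esub> h) a \<otimes> \<alpha> a (k (inv\<^bsub>G\<^esub> a \<otimes>\<^bsub>G\<^esub> x)) = finsum R (\<lambda>b. T b a) (sgsupp f)"
      unfolding T_def using aG x f
      by (simp add: R.finsum_ldistr Pi_def sfG fR hR kR)
  next
    show "(\<lambda>a. finsum R (\<lambda>b. T b a) (sgsupp f)) \<in> P \<rightarrow> carrier R"
      using PG sfG TR by (auto intro!: R.finsum_closed)
  qed simp
  also have "\<dots> = finsum R (\<lambda>b. finsum R (\<lambda>a. T b a) P) (sgsupp f)"
    by (rule finsum_swap[symmetric]) (use f Pfin PG sfG TR in auto)
  also have "\<dots> = finsum R (\<lambda>b. finsum R (\<lambda>c. f b \<otimes> (\<alpha> b (h c) \<otimes> \<alpha> (b \<otimes>\<^bsub>G\<^esub> c) (k (inv\<^bsub>G\<^esub> (b \<otimes>\<^bsub>G\<^esub> c) \<otimes>\<^bsub>G\<^esub> x)))) (sgsupp h)) (sgsupp f)"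
  proof (rule R.finsum_cong')
    fix b assume b: "b \<in> sgsupp f"
    then have bG: "b \<in> carrier G" by (rule sfG)
    have sub: "(\<lambda>c. b \<otimes>\<^bsub>G\<^esub> c) ` sgsupp h \<subseteq> P" using b by (auto simp: P_def)
    have "finsum R (T b) P = finsum R (T b) ((\<lambda>c. b \<otimes>\<^bsub>G\<^esub> c) ` sgsupp h)"
    proof (rule finsum_superset[symmetric])
      fix a assume a: "a \<in> P - (\<lambda>c. b \<otimes>\<^bsub>G\<^esub> c) ` sgsupp h"
      then have aG: "a \<in> carrier G" using PG by blast
      have "inv\<^bsub>G\<^esub> b \<otimes>\<^bsub>G\<^esub> a \<notin> sgsupp h"
      proof
        assume "inv\<^bsub>G\<^esub> b \<otimes>\<^bsub>G\<^esub> a \<in> sgsupp h"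
        moreover have "a = b \<otimes>\<^bsub>G\<^esub> (inv\<^bsub>G\<^esub> b \<otimes>\<^bsub>G\<^esub> a)" using aG bG
          by (simp add: G.m_assoc[symmetric] G.r_inv)
        ultimately show False using a by blast
      qed
      then have "h (inv\<^bsub>G\<^esub> b \<otimes>\<^bsub>G\<^esub> a) = \<zero>" using aG bG by (simp add: not_supp)
      then show "T b a = \<zero>" unfolding T_def using aG bG x by (simp add: fR kR)
    next
      show "T b \<in> P \<rightarrow> carrier R" using PG bG TR by auto
    qed (use Pfin sub in auto)
    also have "\<dots> = finsum R (\<lambda>c. T b (b \<otimes>\<^bsub>G\<^esub> c)) (sgsupp h)"
    proof (rule R.finsum_reindex)
      show "T b \<in> (\<lambda>c. b \<otimes>\<^bsub>G\<^esub> c) ` sgsupp h \<rightarrow> carrier R" using bG shG TR by auto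
      show "inj_on (\<lambda>c. b \<otimes>\<^bsub>G\<^esub> c) (sgsupp h)"
        by (rule inj_onI) (use bG shG in \<open>metis G.l_cancel\<close>)
    qed
    also have "\<dots> = finsum R (\<lambda>c. f b \<otimes> (\<alpha> b (h c) \<otimes> \<alpha> (b \<otimes>\<^bsub>G\<^esub> c) (k (inv\<^bsub>G\<^esub> (b \<otimes>\<^bsub>G\<^esub> c) \<otimes>\<^bsub>G\<^esub> x)))) (sgsupp h)"
    proof (rule R.finsum_cong')
      fix c assume c: "c \<in> sgsupp h"
      then have cG: "c \<in> carrier G" by (rule shG)
      have "inv\<^bsub>G\<^esub> b \<otimes>\<^bsub>G\<^esub> (b \<otimes>\<^bsub>G\<^esub> c) = c" using bG cG
        by (simp add: G.m_assoc[symmetric] G.l_inv)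
      then show "T b (b \<otimes>\<^bsub>G\<^esub> c) = f b \<otimes> (\<alpha> b (h c) \<otimes> \<alpha> (b \<otimes>\<^bsub>G\<^esub> c) (k (inv\<^bsub>G\<^esub> (b \<otimes>\<^bsub>G\<^esub> c) \<otimes>\<^bsub>G\<^esub> x)))"
        unfolding T_def using bG cG x by (simp add: R.m_assoc fR hR kR)
    next
      show "(\<lambda>c. f b \<otimes> (\<alpha> b (h c) \<otimes> \<alpha> (b \<otimes>\<^bsub>G\<^esub> c) (k (inv\<^bsub>G\<^esub> (b \<otimes>\<^bsub>G\<^esub> c) \<otimes>\<^bsub>G\<^esub> x)))) \<in> sgsupp h \<rightarrow> carrier R"
        using bG shG x by (auto intro!: R.m_closed \<alpha>_closed fR hR kR)
    qed simp
    finally show "finsum R (T b) P = finsum R (\<lambda>c. f b \<otimes> (\<alpha> b (h c) \<otimes> \<alpha> (b \<otimes>\<^bsub>G\<^esub> c) (k (inv\<^bsub>G\<^esub> (b \<otimes>\<^bsub>G\<^esub> c) \<otimes>\<^bsub>G\<^esub> x)))) (sgsupp h)" .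
  next
    show "(\<lambda>b. finsum R (\<lambda>c. f b \<otimes> (\<alpha> b (h c) \<otimes> \<alpha> (b \<otimes>\<^bsub>G\<^esub> c) (k (inv\<^bsub>G\<^esub> (b \<otimes>\<^bsub>G\<^esub> c) \<otimes>\<^bsub>G\<^esub> x)))) (sgsupp h)) \<in> sgsupp f \<rightarrow> carrier R"
      using sfG shG x by (auto intro!: R.finsum_closed R.m_closed \<alpha>_closed fR hR kR)
  qed simp
  also have "\<dots> = finsum R (\<lambda>b. f b \<otimes> \<alpha> b ((h \<otimes>\<^bsub>S\<^esub> k) (inv\<^bsub>G\<^esub> b \<otimes>\<^bsub>G\<^esub> x))) (sgsupp f)"
  proof (rule R.finsum_cong')
    fix b assume b: "b \<in> sgsupp f"
    then have bG: "b \<in> carrier G" by (rule sfG)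
    have bx: "inv\<^bsub>G\<^esub> b \<otimes>\<^bsub>G\<^esub> x \<in> carrier G" using bG x by simp
    have "\<alpha> b ((h \<otimes>\<^bsub>S\<^esub> k) (inv\<^bsub>G\<^esub> b \<otimes>\<^bsub>G\<^esub> x))
        = \<alpha> b (finsum R (\<lambda>c. h c \<otimes> \<alpha> c (k (inv\<^bsub>G\<^esub> c \<otimes>\<^bsub>G\<^esub> (inv\<^bsub>G\<^esub> b \<otimes>\<^bsub>G\<^esub> x)))) (sgsupp h))"
      using bx by (simp add: S_mult)
    also have "\<dots> = finsum R (\<lambda>c. \<alpha> b (h c \<otimes> \<alpha> c (k (inv\<^bsub>G\<^esub> c \<otimes>\<^bsub>G\<^esub> (inv\<^bsub>G\<^esub> b \<otimes>\<^bsub>G\<^esub> x))))) (sgsupp h)"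
      by (rule \<alpha>_finsum) (use bG h k shG bx in \<open>auto intro!: term_closed\<close>)
    also have "\<dots> = finsum R (\<lambda>c. \<alpha> b (h c) \<otimes> \<alpha> (b \<otimes>\<^bsub>G\<^esub> c) (k (inv\<^bsub>G\<^esub> (b \<otimes>\<^bsub>G\<^esub> c) \<otimes>\<^bsub>G\<^esub> x))) (sgsupp h)"
    proof (rule R.finsum_cong')
      fix c assume c: "c \<in> sgsupp h"
      then have cG: "c \<in> carrier G" by (rule shG)
      have e: "inv\<^bsub>G\<^esub> c \<otimes>\<^bsub>G\<^esub> (inv\<^bsub>G\<^esub> b \<otimes>\<^bsub>G\<^esub> x) = inv\<^bsub>G\<^esub> (b \<otimes>\<^bsub>G\<^esub> c) \<otimes>\<^bsub>G\<^esub> x"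
        using bG cG x by (simp add: G.inv_mult_group G.m_assoc)
      show "\<alpha> b (h c \<otimes> \<alpha> c (k (inv\<^bsub>G\<^esub> c \<otimes>\<^bsub>G\<^esub> (inv\<^bsub>G\<^esub> b \<otimes>\<^bsub>G\<^esub> x)))) = \<alpha> b (h c) \<otimes> \<alpha> (b \<otimes>\<^bsub>G\<^esub> c) (k (inv\<^bsub>G\<^esub> (b \<otimes>\<^bsub>G\<^esub> c) \<otimes>\<^bsub>G\<^esub> x))"
        unfolding e using bG cG x by (simp add: \<alpha>_comp hR kR)
    next
      show "(\<lambda>c. \<alpha> b (h c) \<otimes> \<alpha> (b \<otimes>\<^bsub>G\<^esub> c) (k (inv\<^bsub>G\<^esub> (b \<otimes>\<^bsub>G\<^esub> c) \<otimes>\<^bsub>G\<^esub> x))) \<in> sgsupp h \<rightarrow> carrier R"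
        using bG shG x by (auto intro!: R.m_closed \<alpha>_closed hR kR)
    qed simp
    finally have "f b \<otimes> \<alpha> b ((h \<otimes>\<^bsub>S\<^esub> k) (inv\<^bsub>G\<^esub> b \<otimes>\<^bsub>G\<^esub> x)) = f b \<otimes> finsum R (\<lambda>c. \<alpha> b (h c) \<otimes> \<alpha> (b \<otimes>\<^bsub>G\<^esub> c) (k (inv\<^bsub>G\<^esub> (b \<otimes>\<^bsub>G\<^esub> c) \<otimes>\<^bsub>G\<^esub> x))) (sgsupp h)"
      by simp
    also have "\<dots> = finsum R (\<lambda>c. f b \<otimes> (\<alpha> b (h c) \<otimes> \<alpha> (b \<otimes>\<^bsub>G\<^esub> c) (k (inv\<^bsub>G\<^esub> (b \<otimes>\<^bsub>G\<^esub> c) \<otimes>\<^bsub>G\<^esub> x)))) (sgsupp h)"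
      by (rule R.finsum_rdistr) (use h bG shG x in \<open>auto intro!: R.m_closed \<alpha>_closed fR hR kR\<close>)
    finally show "finsum R (\<lambda>c. f b \<otimes> (\<alpha> b (h c) \<otimes> \<alpha> (b \<otimes>\<^bsub>G\<^esub> c) (k (inv\<^bsub>G\<^esub> (b \<otimes>\<^bsub>G\<^esub> c) \<otimes>\<^bsub>G\<^esub> x)))) (sgsupp h)
        = f b \<otimes> \<alpha> b ((h \<otimes>\<^bsub>S\<^esub> k) (inv\<^bsub>G\<^esub> b \<otimes>\<^bsub>G\<^esub> x))" by simp
  next
    show "(\<lambda>b. f b \<otimes> \<alpha> b ((h \<otimes>\<^bsub>S\<^esub> k) (inv\<^bsub>G\<^esub> b \<otimes>\<^bsub>G\<^esub> x))) \<in> sgsupp f \<rightarrow> carrier R"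
      using f mult_closed[OF h k] sfG x by (auto intro!: term_closed)
  qed simp
  also have "\<dots> = (f \<otimes>\<^bsub>S\<^esub> (h \<otimes>\<^bsub>S\<^esub> k)) x" using x by (simp add: S_mult)
  finally show "((f \<otimes>\<^bsub>S\<^esub> h) \<otimes>\<^bsub>S\<^esub> k) x = (f \<otimes>\<^bsub>S\<^esub> (h \<otimes>\<^bsub>S\<^esub> k)) x" .
qed

lemma S_ring: "ring S"
proof (rule ringI)
  show "abelian_group S" by (rule S_abelian_group)
  show "monoid S"
    by (rule monoidI) (auto simp: assoc_S l_one_S r_one_S)
qed (auto simp: l_distr_S r_distr_S)

end

lemma ideal_easyI:
  fixes A (structure)
  assumes A: "ring A" and sub: "I \<subseteq> carrier A" and z: "\<zero> \<in> I"
    and add: "\<And>a b. a \<in> I \<Longrightarrow> b \<in> I \<Longrightarrow> a \<oplus> b \<in> I"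
    and neg: "\<And>a. a \<in> I \<Longrightarrow> \<ominus> a \<in> I"
    and l: "\<And>a x. a \<in> I \<Longrightarrow> x \<in> carrier A \<Longrightarrow> x \<otimes> a \<in> I"
    and r: "\<And>a x. a \<in> I \<Longrightarrow> x \<in> carrier A \<Longrightarrow> a \<otimes> x \<in> I"
  shows "ideal I A"
proof -
  interpret ring A by fact
  show ?thesis
  proof (rule idealI[OF A])
    show "subgroup I (add_monoid A)"
      by (rule add.subgroupI) (use sub z add neg in auto)
  qed (use l r in auto)
qed

lemma finsum_ideal:
  fixes A (structure)
  assumes I: "ideal I A" and fin: "finite B" and F: "\<And>i. i \<in> B \<Longrightarrow> F i \<in> I"
  shows "finsum A F B \<in> I"
  using fin F
proof (induct B rule: finite_induct)
  case empty
  interpret ideal I A by (rule I)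
  show ?case by simp
next
  case (insert b B)
  interpret ideal I A by (rule I)
  have FB: "F \<in> B \<rightarrow> carrier A" using insert Icarr by auto
  have Fb: "F b \<in> carrier A" using insert Icarr by auto
  show ?case using insert FB Fb by (simp add: finsum_insert)
qed

context skew
begin

lemma mono_eqI: "r \<in> carrier R \<Longrightarrow> s \<in> carrier R \<Longrightarrow> k \<in> carrier G \<Longrightarrow> monom r k = monom s k \<Longrightarrow> r = s"
  by (metis mono_eval)

lemma mono_zero_iff: "r \<in> carrier R \<Longrightarrow> k \<in> carrier G \<Longrightarrow> monom r k = \<zero>\<^bsub>S\<^esub> \<longleftrightarrow> r = \<zero>"
  by (metis S_zero_mono mono_eqI R.zero_closed)

lemma mono_mult:
  assumes r: "r \<in> carrier R" and s: "s \<in> carrier R" and k: "k \<in> carrier G" and l: "l \<in> carrier G"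
  shows "monom r k \<otimes>\<^bsub>S\<^esub> monom s l = monom (r \<otimes> \<alpha> k s) (k \<otimes>\<^bsub>G\<^esub> l)"
proof (rule S_eqI)
  show "monom r k \<otimes>\<^bsub>S\<^esub> monom s l \<in> carrier S" using r s by simp
  show "monom (r \<otimes> \<alpha> k s) (k \<otimes>\<^bsub>G\<^esub> l) \<in> carrier S" using r s k by simp
  fix x assume x: "x \<in> carrier G"
  have eq: "inv\<^bsub>G\<^esub> k \<otimes>\<^bsub>G\<^esub> x = l \<longleftrightarrow> x = k \<otimes>\<^bsub>G\<^esub> l"
    using k l x by (metis G.inv_closed G.inv_inv G.inv_solve_left)
  have "(monom r k \<otimes>\<^bsub>S\<^esub> monom s l) x = r \<otimes> \<alpha> k (monom s l (inv\<^bsub>G\<^esub> k \<otimes>\<^bsub>G\<^esub> x))"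
    using r s k x by (simp add: mono_left)
  also have "\<dots> = monom (r \<otimes> \<alpha> k s) (k \<otimes>\<^bsub>G\<^esub> l) x"
    using r s k x eq by (simp add: mono_eval)
  finally show "(monom r k \<otimes>\<^bsub>S\<^esub> monom s l) x = monom (r \<otimes> \<alpha> k s) (k \<otimes>\<^bsub>G\<^esub> l) x" .
qed

lemma mono_add:
  assumes r: "r \<in> carrier R" and s: "s \<in> carrier R"
  shows "monom r k \<oplus>\<^bsub>S\<^esub> monom s k = monom (r \<oplus> s) k"
  by (rule S_eqI[OF add_closed[OF mono_closed[OF r] mono_closed[OF s]] mono_closed[OF R.add.m_closed[OF r s]]])
    (use r s in \<open>simp add: S_add mono_eval\<close>)

lemma S_minus:
  assumes f: "f \<in> carrier S"
  shows "\<ominus>\<^bsub>S\<^esub> f = (\<lambda>y\<in>carrier G. \<ominus> f y)"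
proof -
  interpret SR: ring S by (rule S_ring)
  have "(\<lambda>y\<in>carrier G. \<ominus> f y) \<oplus>\<^bsub>S\<^esub> f = \<zero>\<^bsub>S\<^esub>"
    by (rule S_eqI[OF add_closed[OF neg_closed[OF f] f] zero_closed])
      (use S_closed[OF f] in \<open>simp add: S_add S_zero R.l_neg\<close>)
  then show ?thesis using SR.minus_equality neg_closed[OF f] f by blast
qed

lemma mono_minus:
  assumes r: "r \<in> carrier R"
  shows "\<ominus>\<^bsub>S\<^esub> monom r k = monom (\<ominus> r) k"
proof -
  have "\<ominus>\<^bsub>S\<^esub> monom r k = (\<lambda>y\<in>carrier G. \<ominus> monom r k y)" by (rule S_minus) (simp add: r)
  also have "\<dots> = monom (\<ominus> r) k"
    by (rule S_eqI[OF neg_closed[OF mono_closed[OF r]] mono_closed[OF R.add.inv_closed[OF r]]])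
      (use r in \<open>simp add: mono_eval\<close>)
  finally show ?thesis .
qed

lemma S_nonzero_supp: "f \<in> carrier S \<Longrightarrow> f \<noteq> \<zero>\<^bsub>S\<^esub> \<Longrightarrow> sgsupp f \<noteq> {}"
  by (metis S_eqI S_zero empty_iff not_supp restrict_apply' zero_closed)

lemma simple_imp_G_simple:
  assumes simple: "simple_ring S"
  shows "G_simple G R \<alpha>"
proof -
  interpret SR: ring S by (rule S_ring)
  have nz: "carrier S \<noteq> {\<zero>\<^bsub>S\<^esub>}" and ids: "\<And>J. ideal J S \<Longrightarrow> J = {\<zero>\<^bsub>S\<^esub>} \<or> J = carrier S"
    using simple unfolding simple_ring_def by auto
  have R_nz: "carrier R \<noteq> {\<zero>}"
  proof
    assume R0: "carrier R = {\<zero>}"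
    have "carrier S \<subseteq> {\<zero>\<^bsub>S\<^esub>}"
    proof
      fix f assume f: "f \<in> carrier S"
      have "f = \<zero>\<^bsub>S\<^esub>"
        by (rule S_eqI[OF f zero_closed]) (use S_closed[OF f] R0 in \<open>auto simp: S_zero\<close>)
      then show "f \<in> {\<zero>\<^bsub>S\<^esub>}" by simp
    qed
    then show False using nz zero_closed by blast
  qed
  show ?thesis unfolding G_simple_def
  proof (intro conjI allI impI R_nz)
    fix I assume GI: "G_invariant_ideal G R \<alpha> I"
    then have I: "ideal I R" and inv: "\<And>g. g \<in> carrier G \<Longrightarrow> \<alpha> g ` I \<subseteq> I"
      unfolding G_invariant_ideal_def by auto
    interpret I: ideal I R by (rule I)
    define J where "J = {f \<in> carrier S. \<forall>x\<in>carrier G. f x \<in> I}"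
    have mono_J: "\<And>r. r \<in> I \<Longrightarrow> monom r \<one>\<^bsub>G\<^esub> \<in> J"
      unfolding J_def using I.Icarr by (auto simp: mono_eval)
    have J: "ideal J S"
    proof (rule ideal_easyI[OF S_ring])
      show "J \<subseteq> carrier S" by (auto simp: J_def)
      show "\<zero>\<^bsub>S\<^esub> \<in> J" unfolding J_def
        by (intro CollectI conjI ballI zero_closed) (simp add: S_zero)
      show "\<And>a b. a \<in> J \<Longrightarrow> b \<in> J \<Longrightarrow> a \<oplus>\<^bsub>S\<^esub> b \<in> J"
      proof -
        fix a b assume "a \<in> J" "b \<in> J"
        then have a: "a \<in> carrier S" "\<And>y. y \<in> carrier G \<Longrightarrow> a y \<in> I"
          and b: "b \<in> carrier S" "\<And>y. y \<in> carrier G \<Longrightarrow> b y \<in> I" by (auto simp: J_def)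
        show "a \<oplus>\<^bsub>S\<^esub> b \<in> J" unfolding J_def
          by (intro CollectI conjI ballI add_closed a b) (simp add: S_add a b)
      qed
      show "\<And>a. a \<in> J \<Longrightarrow> \<ominus>\<^bsub>S\<^esub> a \<in> J"
      proof -
        fix a assume "a \<in> J"
        then have a: "a \<in> carrier S" "\<And>y. y \<in> carrier G \<Longrightarrow> a y \<in> I" by (auto simp: J_def)
        show "\<ominus>\<^bsub>S\<^esub> a \<in> J" unfolding J_def S_minus[OF a(1)]
          by (intro CollectI conjI ballI neg_closed a) (simp add: a)
      qed
    next
      fix a x assume a: "a \<in> J" and x: "x \<in> carrier S"
      then have aS: "a \<in> carrier S" and aI: "\<And>y. y \<in> carrier G \<Longrightarrow> a y \<in> I" by (auto simp: J_def)
      show "x \<otimes>\<^bsub>S\<^esub> a \<in> J" unfolding J_def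
      proof (intro CollectI conjI ballI)
        show "x \<otimes>\<^bsub>S\<^esub> a \<in> carrier S" using x aS by simp
        fix y assume y: "y \<in> carrier G"
        have "finsum R (\<lambda>g. x g \<otimes> \<alpha> g (a (inv\<^bsub>G\<^esub> g \<otimes>\<^bsub>G\<^esub> y))) (sgsupp x) \<in> I"
        proof (rule finsum_ideal[OF I])
          show "finite (sgsupp x)" using x by simp
          fix g assume g: "g \<in> sgsupp x"
          then have gG: "g \<in> carrier G" using supp_sub by blast
          have "a (inv\<^bsub>G\<^esub> g \<otimes>\<^bsub>G\<^esub> y) \<in> I" using aI gG y by simp
          then have "\<alpha> g (a (inv\<^bsub>G\<^esub> g \<otimes>\<^bsub>G\<^esub> y)) \<in> I" using inv[OF gG] by blast
          then show "x g \<otimes> \<alpha> g (a (inv\<^bsub>G\<^esub> g \<otimes>\<^bsub>G\<^esub> y)) \<in> I"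
            using S_closed[OF x gG] I.I_l_closed by blast
        qed
        then show "(x \<otimes>\<^bsub>S\<^esub> a) y \<in> I" using y by (simp add: S_mult)
      qed
      show "a \<otimes>\<^bsub>S\<^esub> x \<in> J" unfolding J_def
      proof (intro CollectI conjI ballI)
        show "a \<otimes>\<^bsub>S\<^esub> x \<in> carrier S" using x aS by simp
        fix y assume y: "y \<in> carrier G"
        have "finsum R (\<lambda>g. a g \<otimes> \<alpha> g (x (inv\<^bsub>G\<^esub> g \<otimes>\<^bsub>G\<^esub> y))) (sgsupp a) \<in> I"
        proof (rule finsum_ideal[OF I])
          show "finite (sgsupp a)" using aS by simp
          fix g assume g: "g \<in> sgsupp a"
          then have gG: "g \<in> carrier G" using supp_sub by blast
          have "\<alpha> g (x (inv\<^bsub>G\<^esub> g \<otimes>\<^bsub>G\<^esub> y)) \<in> carrier R" using S_closed2[OF x gG y] gG by simp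
          then show "a g \<otimes> \<alpha> g (x (inv\<^bsub>G\<^esub> g \<otimes>\<^bsub>G\<^esub> y)) \<in> I"
            using aI[OF gG] I.I_r_closed by blast
        qed
        then show "(a \<otimes>\<^bsub>S\<^esub> x) y \<in> I" using y by (simp add: S_mult)
      qed
    qed
    from ids[OF J] show "I = {\<zero>} \<or> I = carrier R"
    proof
      assume J0: "J = {\<zero>\<^bsub>S\<^esub>}"
      have "I \<subseteq> {\<zero>}"
      proof
        fix r assume r: "r \<in> I"
        then have "monom r \<one>\<^bsub>G\<^esub> = \<zero>\<^bsub>S\<^esub>" using mono_J J0 by blast
        then have "r = \<zero>" using mono_zero_iff I.Icarr[OF r] by simp
        then show "r \<in> {\<zero>}" by simp
      qed
      then show ?thesis using I.zero_closed by blast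
    next
      assume "J = carrier S"
      then have "\<one>\<^bsub>S\<^esub> \<in> J" by simp
      then have "\<forall>x\<in>carrier G. \<one>\<^bsub>S\<^esub> x \<in> I" unfolding J_def by blast
      then have "\<one>\<^bsub>S\<^esub> \<one>\<^bsub>G\<^esub> \<in> I" by blast
      then have "\<one> \<in> I" by (simp add: S_one)
      then show ?thesis using I.one_imp_carrier by blast
    qed
  qed
qed

end

context skew
begin

lemma sub_zero_eq:
  assumes a: "a \<in> carrier R" and b: "b \<in> carrier R" and z: "a \<oplus> \<ominus> b = \<zero>"
  shows "a = b"
proof -
  have "a = (a \<oplus> \<ominus> b) \<oplus> b" using a b by (simp add: R.a_assoc R.l_neg)
  then show ?thesis using z b by simp
qed

lemma key_corner:
  assumes vn: "\<forall>a\<in>carrier R. \<exists>x\<in>carrier R. a \<otimes> x \<otimes> a = a"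
    and g: "g \<in> carrier G" and e: "e \<in> carrier R" and ee: "e \<otimes> e = e" and enz: "e \<noteq> \<zero>"
    and u: "u \<in> carrier R" and eu: "e \<otimes> u = u" and uE: "u \<otimes> \<alpha> g e = u"
    and F1: "\<And>y. y \<in> carrier R \<Longrightarrow> e \<otimes> y \<otimes> e = y \<Longrightarrow> y \<otimes> u = u \<otimes> \<alpha> g y"
    and F2: "\<And>y. y \<in> carrier R \<Longrightarrow> e \<otimes> y \<otimes> e = y \<Longrightarrow> y \<otimes> u = \<zero> \<Longrightarrow> y = \<zero>"
    and F3: "\<And>y. y \<in> carrier R \<Longrightarrow> \<alpha> g e \<otimes> y \<otimes> \<alpha> g e = y \<Longrightarrow> u \<otimes> y = \<zero> \<Longrightarrow> y = \<zero>"
  shows "corner_inner R (\<alpha> g)"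
proof -
  define E where "E = \<alpha> g e"
  have E: "E \<in> carrier R" using g e by (simp add: E_def)
  have EE: "E \<otimes> E = E" using g e ee by (simp add: E_def \<alpha>_mult[symmetric])
  have Enz: "E \<noteq> \<zero>" using g e enz \<alpha>_zero_iff by (simp add: E_def)
  have uE': "u \<otimes> E = u" using uE by (simp add: E_def)
  obtain w where w: "w \<in> carrier R" and uwu: "u \<otimes> w \<otimes> u = u" using vn u by blast
  have ee2: "\<And>q. q \<in> carrier R \<Longrightarrow> e \<otimes> (e \<otimes> q) = e \<otimes> q"
    using e ee by (metis R.m_assoc)
  have EE2: "\<And>q. q \<in> carrier R \<Longrightarrow> E \<otimes> (E \<otimes> q) = E \<otimes> q"
    using E EE by (metis R.m_assoc)
  have eu2: "\<And>q. q \<in> carrier R \<Longrightarrow> e \<otimes> (u \<otimes> q) = u \<otimes> q"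
    using e u eu by (metis R.m_assoc)
  have uE2: "\<And>q. q \<in> carrier R \<Longrightarrow> u \<otimes> (E \<otimes> q) = u \<otimes> q"
    using E u uE' by (metis R.m_assoc)
  have uwu1: "u \<otimes> (w \<otimes> u) = u" using uwu u w by (simp add: R.m_assoc)
  have uwu2: "\<And>q. q \<in> carrier R \<Longrightarrow> u \<otimes> (w \<otimes> (u \<otimes> q)) = u \<otimes> q"
    using u w uwu1 by (metis R.m_assoc R.m_closed)
  note simps = R.m_assoc R.r_distr R.l_distr R.r_minus R.l_minus ee2 EE2 eu2 uE2 uwu1 uwu2 ee EE eu uE' e E u w
  define v where "v = E \<otimes> (w \<otimes> e)"
  have v: "v \<in> carrier R" using E w e by (simp add: v_def)
  have uwe: "u \<otimes> (w \<otimes> e) = e"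
  proof -
    define y where "y = e \<oplus> \<ominus> (u \<otimes> (w \<otimes> e))"
    have y: "y \<in> carrier R" using e u w by (simp add: y_def)
    have "e \<otimes> y \<otimes> e = y" unfolding y_def by (simp add: simps)
    moreover have "y \<otimes> u = \<zero>" unfolding y_def by (simp add: simps R.r_neg)
    ultimately have "y = \<zero>" using F2 y by blast
    then have "e \<oplus> \<ominus> (u \<otimes> (w \<otimes> e)) = \<zero>" by (simp add: y_def)
    then show ?thesis using sub_zero_eq[of e "u \<otimes> (w \<otimes> e)"] e u w by simp
  qed
  have uv: "u \<otimes> v = e" unfolding v_def using uwe by (simp add: simps)
  have Ewu: "E \<otimes> (w \<otimes> u) = E"
  proof -
    define y where "y = E \<oplus> \<ominus> (E \<otimes> (w \<otimes> u))"
    have y: "y \<in> carrier R" using E u w by (simp add: y_def)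
    have "E \<otimes> y \<otimes> E = y" unfolding y_def by (simp add: simps)
    moreover have "u \<otimes> y = \<zero>" unfolding y_def by (simp add: simps R.r_neg)
    ultimately have "y = \<zero>" using F3 y unfolding E_def by blast
    then have "E \<oplus> \<ominus> (E \<otimes> (w \<otimes> u)) = \<zero>" by (simp add: y_def)
    then show ?thesis using sub_zero_eq[of E "E \<otimes> (w \<otimes> u)"] E u w by simp
  qed
  have vu: "v \<otimes> u = E" unfolding v_def using Ewu by (simp add: simps)
  have conj: "\<alpha> g x = v \<otimes> x \<otimes> u" if x: "x \<in> carrier R" "e \<otimes> x \<otimes> e = x" for x
  proof -
    have xu: "x \<otimes> u = u \<otimes> \<alpha> g x" using F1 x by blast
    have ex: "e \<otimes> x = x" using x ee e by (metis R.m_assoc R.m_closed)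
    have "\<alpha> g x = \<alpha> g (e \<otimes> x)" using ex by simp
    also have "\<dots> = E \<otimes> \<alpha> g x" using g e x by (simp add: E_def)
    finally have Eax: "\<alpha> g x = E \<otimes> \<alpha> g x" .
    have "v \<otimes> x \<otimes> u = v \<otimes> (x \<otimes> u)" using v x u by (simp add: R.m_assoc)
    also have "\<dots> = v \<otimes> u \<otimes> \<alpha> g x" using xu v u g x by (simp add: R.m_assoc)
    also have "\<dots> = \<alpha> g x" using vu Eax by simp
    finally show ?thesis by simp
  qed
  have inj: "inj_on (\<alpha> g) (carrier R)" using \<alpha>_bij[OF g] bij_betw_imp_inj_on by blast
  have e': "inv_into (carrier R) (\<alpha> g) E = e" unfolding E_def using inj e by simp
  show ?thesis unfolding corner_inner_def
  proof (intro conjI bexI[of _ E])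
    show "\<alpha> g \<in> ring_iso R R" using act g unfolding ring_action_def by blast
    show "E \<in> carrier R" by (rule E)
    show "E \<noteq> \<zero>" by (rule Enz)
    show "E \<otimes> E = E" by (rule EE)
    show "let e' = inv_into (carrier R) (\<alpha> g) E
      in \<exists>u\<in>corner R E e'. \<exists>v\<in>corner R e' E. u \<otimes> v = E \<and> v \<otimes> u = e' \<and>
           (\<forall>x\<in>corner R e' e'. \<alpha> g x = u \<otimes> x \<otimes> v) \<and>
           (\<forall>y\<in>corner R E E. inv_into (carrier R) (\<alpha> g) y = v \<otimes> y \<otimes> u)"
      unfolding e' Let_def
    proof (rule bexI[of _ v], rule bexI[of _ u], intro conjI ballI)
      show "v \<in> corner R E e" unfolding corner_def v_def using w E e
        by (intro CollectI exI[of _ w] conjI) (simp_all add: R.m_assoc)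
      show "u \<in> corner R e E" unfolding corner_def
        by (intro CollectI exI[of _ u] conjI) (use u eu uE' in simp_all)
      show "v \<otimes> u = E" by (rule vu)
      show "u \<otimes> v = e" by (rule uv)
    next
      fix x assume "x \<in> corner R e e"
      then obtain t where t: "t \<in> carrier R" and xt: "x = e \<otimes> t \<otimes> e" unfolding corner_def by blast
      have x: "x \<in> carrier R" using t e xt by simp
      have "e \<otimes> x \<otimes> e = x" unfolding xt using t by (simp add: simps)
      then show "\<alpha> g x = v \<otimes> x \<otimes> u" using conj x by blast
    next
      fix y assume "y \<in> corner R E E"
      then obtain t where t: "t \<in> carrier R" and yt: "y = E \<otimes> t \<otimes> E" unfolding corner_def by blast
      define x where "x = \<alpha> (inv\<^bsub>G\<^esub> g) y"
      have y: "y \<in> carrier R" using t E yt by simp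
      have x: "x \<in> carrier R" using g y by (simp add: x_def)
      have gx: "\<alpha> g x = y" using g y by (simp add: x_def)
      have ix: "inv_into (carrier R) (\<alpha> g) y = x" using inj x gx by (metis inv_into_f_f)
      have xe: "x = e \<otimes> \<alpha> (inv\<^bsub>G\<^esub> g) t \<otimes> e"
        unfolding x_def yt E_def using g e t by simp
      have exe: "e \<otimes> x \<otimes> e = x"
        unfolding xe using g t e by (simp add: simps)
      have "y = v \<otimes> x \<otimes> u" using conj[OF x exe] gx by simp
      then have "u \<otimes> y \<otimes> v = (u \<otimes> v) \<otimes> x \<otimes> (u \<otimes> v)" using u v x by (simp add: R.m_assoc)
      also have "\<dots> = x" using uv exe by simp
      finally show "inv_into (carrier R) (\<alpha> g) y = u \<otimes> y \<otimes> v" using ix by simp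
    qed
  qed
qed

end

lemma ne_singleton_ex: "z \<in> A \<Longrightarrow> A \<noteq> {z} \<Longrightarrow> \<exists>f. f \<in> A \<and> f \<noteq> z"
  by blast

context skew
begin

lemma nonzero_ideal_has_mono:
  assumes vn: "\<forall>a\<in>carrier R. \<exists>x\<in>carrier R. a \<otimes> x \<otimes> a = a"
    and outer: "\<forall>g\<in>carrier G. corner_inner R (\<alpha> g) \<longrightarrow> g = \<one>\<^bsub>G\<^esub>"
    and J: "ideal J S" and Jnz: "J \<noteq> {\<zero>\<^bsub>S\<^esub>}"
  shows "\<exists>r\<in>carrier R. r \<noteq> \<zero> \<and> monom r \<one>\<^bsub>G\<^esub> \<in> J"
proof -
  interpret SR: ring S by (rule S_ring)
  interpret JI: ideal J S by (rule J)
  have "\<exists>f. f \<in> J \<and> f \<noteq> \<zero>\<^bsub>S\<^esub>" by (rule ne_singleton_ex[OF JI.zero_closed Jnz])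
  then obtain k where k: "k \<in> J \<and> k \<noteq> \<zero>\<^bsub>S\<^esub>" by (rule exE)
  have "\<exists>x. (x \<in> J \<and> x \<noteq> \<zero>\<^bsub>S\<^esub>) \<and> (\<forall>y. y \<in> J \<and> y \<noteq> \<zero>\<^bsub>S\<^esub> \<longrightarrow> card (sgsupp x) \<le> card (sgsupp y))"
    by (rule ex_has_least_nat[where P = "\<lambda>f. f \<in> J \<and> f \<noteq> \<zero>\<^bsub>S\<^esub>" and m = "\<lambda>f. card (sgsupp f)", OF k])
  then obtain f0 where f0P: "(f0 \<in> J \<and> f0 \<noteq> \<zero>\<^bsub>S\<^esub>) \<and> (\<forall>y. y \<in> J \<and> y \<noteq> \<zero>\<^bsub>S\<^esub> \<longrightarrow> card (sgsupp f0) \<le> card (sgsupp y))"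
    by (rule exE)
  then have f0J: "f0 \<in> J" and f0nz: "f0 \<noteq> \<zero>\<^bsub>S\<^esub>"
    and min0': "\<forall>h. h \<in> J \<and> h \<noteq> \<zero>\<^bsub>S\<^esub> \<longrightarrow> card (sgsupp f0) \<le> card (sgsupp h)" by simp_all
  have min0: "\<And>h. h \<in> J \<Longrightarrow> h \<noteq> \<zero>\<^bsub>S\<^esub> \<Longrightarrow> card (sgsupp f0) \<le> card (sgsupp h)" using min0' by blast
  have f0S: "f0 \<in> carrier S" using JI.Icarr[OF f0J] .
  obtain g0 where g0: "g0 \<in> sgsupp f0" using S_nonzero_supp[OF f0S f0nz] by blast
  have g0G: "g0 \<in> carrier G" using g0 supp_sub by blast
  define a where "a = f0 g0"
  have a: "a \<in> carrier R" using S_closed[OF f0S g0G] by (simp add: a_def)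
  have anz: "a \<noteq> \<zero>" using g0 by (simp add: a_def sgsupp_def)
  obtain b where b: "b \<in> carrier R" and aba: "a \<otimes> b \<otimes> a = a" using vn a by blast
  define e where "e = b \<otimes> a"
  define c where "c = e \<otimes> b"
  define d where "d = \<alpha> (inv\<^bsub>G\<^esub> g0) e"
  have e: "e \<in> carrier R" using a b by (simp add: e_def)
  have c: "c \<in> carrier R" using e b by (simp add: c_def)
  have d: "d \<in> carrier R" using e g0G by (simp add: d_def)
  have aba': "a \<otimes> (b \<otimes> a) = a" using aba a b by (simp add: R.m_assoc)
  have ee: "e \<otimes> e = e" unfolding e_def using a b aba' by (simp add: R.m_assoc[symmetric]) (simp add: R.m_assoc)
  have ec: "e \<otimes> c = c" unfolding c_def using e b ee by (simp add: R.m_assoc[symmetric])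
  have enz: "e \<noteq> \<zero>"
  proof
    assume "e = \<zero>"
    then have "a = \<zero>" using aba' a by (simp add: e_def)
    with anz show False by simp
  qed
  define f1 where "f1 = (monom c \<one>\<^bsub>G\<^esub> \<otimes>\<^bsub>S\<^esub> f0) \<otimes>\<^bsub>S\<^esub> monom d (inv\<^bsub>G\<^esub> g0)"
  have f1J: "f1 \<in> J" unfolding f1_def
    using JI.I_l_closed JI.I_r_closed f0J c d by simp
  have f1S: "f1 \<in> carrier S" using JI.Icarr[OF f1J] .
  have f1_eval: "f1 x = c \<otimes> f0 (x \<otimes>\<^bsub>G\<^esub> g0) \<otimes> \<alpha> x e" if x: "x \<in> carrier G" for x
  proof -
    have xg: "x \<otimes>\<^bsub>G\<^esub> g0 \<in> carrier G" using x g0G by simp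
    have "f1 x = (monom c \<one>\<^bsub>G\<^esub> \<otimes>\<^bsub>S\<^esub> f0) (x \<otimes>\<^bsub>G\<^esub> g0) \<otimes> \<alpha> (x \<otimes>\<^bsub>G\<^esub> g0) d"
      unfolding f1_def using mono_right[OF d _ _ x, of "inv\<^bsub>G\<^esub> g0" "monom c \<one>\<^bsub>G\<^esub> \<otimes>\<^bsub>S\<^esub> f0"] g0G c f0S
      by simp
    also have "(monom c \<one>\<^bsub>G\<^esub> \<otimes>\<^bsub>S\<^esub> f0) (x \<otimes>\<^bsub>G\<^esub> g0) = c \<otimes> f0 (x \<otimes>\<^bsub>G\<^esub> g0)"
      using mono_left[OF c G.one_closed f0S xg] S_closed[OF f0S xg] xg by simp
    also have "\<alpha> (x \<otimes>\<^bsub>G\<^esub> g0) d = \<alpha> x e"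
      unfolding d_def using x g0G e by (simp add: \<alpha>_comp)
    finally show ?thesis .
  qed
  have f1R: "\<And>x. x \<in> carrier G \<Longrightarrow> f1 x \<in> carrier R" by (rule S_closed[OF f1S])
  have f1_1: "f1 \<one>\<^bsub>G\<^esub> = e"
  proof -
    have "f1 \<one>\<^bsub>G\<^esub> = c \<otimes> a \<otimes> e" using f1_eval[of "\<one>\<^bsub>G\<^esub>"] g0G e by (simp add: a_def)
    also have "\<dots> = e \<otimes> e \<otimes> e" unfolding c_def e_def using a b by (simp add: R.m_assoc)
    also have "\<dots> = e" using ee by simp
    finally show ?thesis .
  qed
  have ef1: "e \<otimes> f1 x = f1 x" if x: "x \<in> carrier G" for x
    using f1_eval[OF x] ec e c x g0G S_closed[OF f0S, of "x \<otimes>\<^bsub>G\<^esub> g0"]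
    by (simp add: R.m_assoc[symmetric])
  have f1e: "f1 x \<otimes> \<alpha> x e = f1 x" if x: "x \<in> carrier G" for x
  proof -
    have "\<alpha> x e \<otimes> \<alpha> x e = \<alpha> x e" using x e ee by (simp add: \<alpha>_mult[symmetric])
    then show ?thesis
      using f1_eval[OF x] e c x g0G S_closed[OF f0S, of "x \<otimes>\<^bsub>G\<^esub> g0"] by (simp add: R.m_assoc)
  qed
  have one_supp: "\<one>\<^bsub>G\<^esub> \<in> sgsupp f1" using f1_1 enz by (simp add: sgsupp_def)
  have supp_f1: "sgsupp f1 \<subseteq> (\<lambda>y. y \<otimes>\<^bsub>G\<^esub> inv\<^bsub>G\<^esub> g0) ` sgsupp f0"
  proof
    fix x assume x: "x \<in> sgsupp f1"
    then have xG: "x \<in> carrier G" and nz: "f1 x \<noteq> \<zero>" by (auto simp: sgsupp_def)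
    have xg: "x \<otimes>\<^bsub>G\<^esub> g0 \<in> carrier G" using xG g0G by simp
    have "f0 (x \<otimes>\<^bsub>G\<^esub> g0) \<noteq> \<zero>"
    proof
      assume "f0 (x \<otimes>\<^bsub>G\<^esub> g0) = \<zero>"
      then have "f1 x = \<zero>" using f1_eval[OF xG] c e xG by simp
      with nz show False by simp
    qed
    then have "x \<otimes>\<^bsub>G\<^esub> g0 \<in> sgsupp f0" using xg by (simp add: sgsupp_def)
    moreover have "x = (x \<otimes>\<^bsub>G\<^esub> g0) \<otimes>\<^bsub>G\<^esub> inv\<^bsub>G\<^esub> g0" using xG g0G
      by (simp add: G.m_assoc G.r_inv)
    ultimately show "x \<in> (\<lambda>y. y \<otimes>\<^bsub>G\<^esub> inv\<^bsub>G\<^esub> g0) ` sgsupp f0" by blast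
  qed
  have fin1: "finite (sgsupp f1)" using f1S by simp
  have "card (sgsupp f1) \<le> card ((\<lambda>y. y \<otimes>\<^bsub>G\<^esub> inv\<^bsub>G\<^esub> g0) ` sgsupp f0)"
    by (rule card_mono) (use supp_f1 f0S in auto)
  also have "\<dots> \<le> card (sgsupp f0)" by (rule card_image_le) (use f0S in simp)
  finally have c10: "card (sgsupp f1) \<le> card (sgsupp f0)" .
  have f1nz: "f1 \<noteq> \<zero>\<^bsub>S\<^esub>" using f1_1 enz by (auto simp: S_zero)
  have min1: "\<And>h. h \<in> J \<Longrightarrow> h \<noteq> \<zero>\<^bsub>S\<^esub> \<Longrightarrow> card (sgsupp f1) \<le> card (sgsupp h)"
    using min0 c10 by fastforce
  have MP: "h = \<zero>\<^bsub>S\<^esub>" if h: "h \<in> J" "sgsupp h \<subseteq> sgsupp f1" and p: "p \<in> sgsupp f1" "h p = \<zero>" for h p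
  proof (rule ccontr)
    assume hnz: "h \<noteq> \<zero>\<^bsub>S\<^esub>"
    have "sgsupp h \<subseteq> sgsupp f1 - {p}" using h p by (auto simp: sgsupp_def)
    then have "card (sgsupp h) \<le> card (sgsupp f1 - {p})" using fin1 by (intro card_mono) auto
    also have "\<dots> < card (sgsupp f1)" by (rule card_Diff1_less[OF fin1 p(1)])
    finally show False using min1[OF h(1) hnz] by simp
  qed
  have supp1: "sgsupp f1 \<subseteq> {\<one>\<^bsub>G\<^esub>}"
  proof
    fix g assume g: "g \<in> sgsupp f1"
    then have gG: "g \<in> carrier G" using supp_sub by blast
    show "g \<in> {\<one>\<^bsub>G\<^esub>}"
    proof (rule ccontr)
      assume g1: "g \<notin> {\<one>\<^bsub>G\<^esub>}"
      define u where "u = f1 g"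
      have u: "u \<in> carrier R" using f1R gG by (simp add: u_def)
      have eu: "e \<otimes> u = u" using ef1 gG by (simp add: u_def)
      have uE: "u \<otimes> \<alpha> g e = u" using f1e gG by (simp add: u_def)
      have yee: "y \<otimes> e = y" "e \<otimes> y = y" if y: "y \<in> carrier R" "e \<otimes> y \<otimes> e = y" for y
      proof -
        show "y \<otimes> e = y" using y e ee by (metis R.m_assoc R.m_closed)
        show "e \<otimes> y = y" using y e ee by (metis R.m_assoc R.m_closed)
      qed
      have F1: "y \<otimes> u = u \<otimes> \<alpha> g y" if y: "y \<in> carrier R" "e \<otimes> y \<otimes> e = y" for y
      proof -
        define h where "h = (monom y \<one>\<^bsub>G\<^esub> \<otimes>\<^bsub>S\<^esub> f1) \<oplus>\<^bsub>S\<^esub> \<ominus>\<^bsub>S\<^esub> (f1 \<otimes>\<^bsub>S\<^esub> monom y \<one>\<^bsub>G\<^esub>)"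
        have hJ: "h \<in> J" unfolding h_def
          using JI.I_l_closed JI.I_r_closed f1J y by (simp add: JI.a_closed JI.a_inv_closed)
        have h_eval: "h x = y \<otimes> f1 x \<oplus> \<ominus> (f1 x \<otimes> \<alpha> x y)" if x: "x \<in> carrier G" for x
        proof -
          have m1: "(monom y \<one>\<^bsub>G\<^esub> \<otimes>\<^bsub>S\<^esub> f1) x = y \<otimes> f1 x"
            using mono_left[OF y(1) G.one_closed f1S x] f1R x by simp
          have m2: "(f1 \<otimes>\<^bsub>S\<^esub> monom y \<one>\<^bsub>G\<^esub>) x = f1 x \<otimes> \<alpha> x y"
            using mono_right[OF y(1) G.one_closed f1S x] x by simp
          have "h x = (monom y \<one>\<^bsub>G\<^esub> \<otimes>\<^bsub>S\<^esub> f1) x \<oplus> (\<ominus>\<^bsub>S\<^esub> (f1 \<otimes>\<^bsub>S\<^esub> monom y \<one>\<^bsub>G\<^esub>)) x"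
            unfolding h_def using x by (simp add: S_add)
          also have "(\<ominus>\<^bsub>S\<^esub> (f1 \<otimes>\<^bsub>S\<^esub> monom y \<one>\<^bsub>G\<^esub>)) x = \<ominus> ((f1 \<otimes>\<^bsub>S\<^esub> monom y \<one>\<^bsub>G\<^esub>) x)"
            using x f1S y by (simp add: S_minus)
          finally show ?thesis using m1 m2 by simp
        qed
        have "sgsupp h \<subseteq> sgsupp f1"
        proof
          fix x assume "x \<in> sgsupp h"
          then have xG: "x \<in> carrier G" and nz: "h x \<noteq> \<zero>" by (auto simp: sgsupp_def)
          show "x \<in> sgsupp f1"
          proof (rule ccontr)
            assume "x \<notin> sgsupp f1"
            then have "f1 x = \<zero>" using xG by (simp add: not_supp)
            then have "h x = \<zero>" using h_eval[OF xG] y xG by simp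
            with nz show False by simp
          qed
        qed
        moreover have "h \<one>\<^bsub>G\<^esub> = \<zero>"
          using h_eval[of "\<one>\<^bsub>G\<^esub>"] f1_1 yee[OF y] y by (simp add: R.r_neg)
        ultimately have "h = \<zero>\<^bsub>S\<^esub>" using MP[OF hJ _ one_supp] by blast
        then have "h g = \<zero>" using gG by (simp add: S_zero)
        then have "y \<otimes> u \<oplus> \<ominus> (u \<otimes> \<alpha> g y) = \<zero>" using h_eval[OF gG] by (simp add: u_def)
        then show ?thesis using sub_zero_eq y u gG by simp
      qed
      have F2: "y = \<zero>" if y: "y \<in> carrier R" "e \<otimes> y \<otimes> e = y" "y \<otimes> u = \<zero>" for y
      proof -
        define h where "h = monom y \<one>\<^bsub>G\<^esub> \<otimes>\<^bsub>S\<^esub> f1"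
        have hJ: "h \<in> J" unfolding h_def using JI.I_l_closed f1J y by simp
        have h_eval: "h x = y \<otimes> f1 x" if x: "x \<in> carrier G" for x
          unfolding h_def using mono_left[OF y(1) G.one_closed f1S x] f1R x by simp
        have "sgsupp h \<subseteq> sgsupp f1"
        proof
          fix x assume "x \<in> sgsupp h"
          then have xG: "x \<in> carrier G" and nz: "h x \<noteq> \<zero>" by (auto simp: sgsupp_def)
          show "x \<in> sgsupp f1"
          proof (rule ccontr)
            assume "x \<notin> sgsupp f1"
            then have "f1 x = \<zero>" using xG by (simp add: not_supp)
            then have "h x = \<zero>" using h_eval[OF xG] y by simp
            with nz show False by simp
          qed
        qed
        moreover have "h g = \<zero>" using h_eval[OF gG] y by (simp add: u_def)
        ultimately have "h = \<zero>\<^bsub>S\<^esub>" using MP[OF hJ _ g] by blast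
        then have "h \<one>\<^bsub>G\<^esub> = \<zero>" by (simp add: S_zero)
        then show ?thesis using h_eval[of "\<one>\<^bsub>G\<^esub>"] f1_1 yee[OF y(1,2)] by simp
      qed
      have F3: "y = \<zero>" if y: "y \<in> carrier R" "\<alpha> g e \<otimes> y \<otimes> \<alpha> g e = y" "u \<otimes> y = \<zero>" for y
      proof -
        define z where "z = \<alpha> (inv\<^bsub>G\<^esub> g) y"
        have z: "z \<in> carrier R" using y gG by (simp add: z_def)
        have yz: "y = \<alpha> g z" using y gG by (simp add: z_def)
        have zez: "e \<otimes> z \<otimes> e = z"
        proof -
          have "e \<otimes> z \<otimes> e = \<alpha> (inv\<^bsub>G\<^esub> g) (\<alpha> g e \<otimes> y \<otimes> \<alpha> g e)"
            unfolding z_def using gG e y(1) by simp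
          also have "\<dots> = z" unfolding z_def using y(2) by simp
          finally show ?thesis .
        qed
        define h where "h = f1 \<otimes>\<^bsub>S\<^esub> monom z \<one>\<^bsub>G\<^esub>"
        have hJ: "h \<in> J" unfolding h_def using JI.I_r_closed f1J z by simp
        have h_eval: "h x = f1 x \<otimes> \<alpha> x z" if x: "x \<in> carrier G" for x
          unfolding h_def using mono_right[OF z G.one_closed f1S x] x by simp
        have "sgsupp h \<subseteq> sgsupp f1"
        proof
          fix x assume "x \<in> sgsupp h"
          then have xG: "x \<in> carrier G" and nz: "h x \<noteq> \<zero>" by (auto simp: sgsupp_def)
          show "x \<in> sgsupp f1"
          proof (rule ccontr)
            assume "x \<notin> sgsupp f1"
            then have "f1 x = \<zero>" using xG by (simp add: not_supp)
            then have "h x = \<zero>" using h_eval[OF xG] z xG by simp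
            with nz show False by simp
          qed
        qed
        moreover have "h g = \<zero>" using h_eval[OF gG] y yz by (simp add: u_def)
        ultimately have "h = \<zero>\<^bsub>S\<^esub>" using MP[OF hJ _ g] by blast
        then have "h \<one>\<^bsub>G\<^esub> = \<zero>" by (simp add: S_zero)
        then have "z = \<zero>" using h_eval[of "\<one>\<^bsub>G\<^esub>"] f1_1 yee[OF z zez] z by simp
        then show ?thesis using yz gG by simp
      qed
      have "corner_inner R (\<alpha> g)"
        by (rule key_corner[OF vn gG e ee enz u eu uE F1 F2 F3])
      then have "g = \<one>\<^bsub>G\<^esub>" using outer gG by blast
      with g1 show False by simp
    qed
  qed
  have "f1 = monom e \<one>\<^bsub>G\<^esub>"
  proof (rule S_eqI[OF f1S mono_closed[OF e]])
    fix x assume x: "x \<in> carrier G"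
    show "f1 x = monom e \<one>\<^bsub>G\<^esub> x"
    proof (cases "x = \<one>\<^bsub>G\<^esub>")
      case True then show ?thesis using f1_1 by (simp add: mono_eval)
    next
      case False
      then have "x \<notin> sgsupp f1" using supp1 by blast
      then show ?thesis using x False by (simp add: mono_eval not_supp)
    qed
  qed
  then show ?thesis using f1J e enz by blast
qed

lemma G_simple_imp_simple:
  assumes vn: "\<forall>a\<in>carrier R. \<exists>x\<in>carrier R. a \<otimes> x \<otimes> a = a"
    and outer: "\<forall>g\<in>carrier G. corner_inner R (\<alpha> g) \<longrightarrow> g = \<one>\<^bsub>G\<^esub>"
    and Gs: "G_simple G R \<alpha>"
  shows "simple_ring S"
proof -
  interpret SR: ring S by (rule S_ring)
  have Rnz: "carrier R \<noteq> {\<zero>}" and Gids: "\<And>I. G_invariant_ideal G R \<alpha> I \<Longrightarrow> I = {\<zero>} \<or> I = carrier R"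
    using Gs unfolding G_simple_def by auto
  have one_nz: "\<one> \<noteq> \<zero>"
  proof
    assume "\<one> = \<zero>"
    then have "\<And>r. r \<in> carrier R \<Longrightarrow> r = \<zero>" by (metis R.r_one R.r_null)
    then show False using Rnz R.zero_closed by blast
  qed
  have "\<one>\<^bsub>S\<^esub> \<noteq> \<zero>\<^bsub>S\<^esub>"
    using mono_zero_iff[of \<one> "\<one>\<^bsub>G\<^esub>"] one_nz by (simp add: S_one_mono)
  then have Snz: "carrier S \<noteq> {\<zero>\<^bsub>S\<^esub>}" using one_closed by blast
  show ?thesis unfolding simple_ring_def
  proof (intro conjI allI impI S_ring Snz)
    fix J assume J: "ideal J S"
    interpret JI: ideal J S by (rule J)
    show "J = {\<zero>\<^bsub>S\<^esub>} \<or> J = carrier S"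
    proof (rule disjCI)
      assume Jnz: "J \<noteq> carrier S"
      show "J = {\<zero>\<^bsub>S\<^esub>}"
      proof (rule ccontr)
        assume Jnz0: "J \<noteq> {\<zero>\<^bsub>S\<^esub>}"
        obtain r where r: "r \<in> carrier R" "r \<noteq> \<zero>" "monom r \<one>\<^bsub>G\<^esub> \<in> J"
          using nonzero_ideal_has_mono[OF vn outer J Jnz0] by blast
        define I where "I = {s \<in> carrier R. monom s \<one>\<^bsub>G\<^esub> \<in> J}"
        have I: "ideal I R"
        proof (rule ideal_easyI[OF R.ring_axioms])
          show "I \<subseteq> carrier R" by (auto simp: I_def)
          show "\<zero> \<in> I" unfolding I_def using JI.zero_closed by (simp add: S_zero_mono[symmetric])
          show "\<And>a b. a \<in> I \<Longrightarrow> b \<in> I \<Longrightarrow> a \<oplus> b \<in> I"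
            unfolding I_def using JI.a_closed by (auto simp: mono_add[symmetric])
          show "\<And>a. a \<in> I \<Longrightarrow> \<ominus> a \<in> I"
            unfolding I_def using JI.a_inv_closed by (auto simp: mono_minus[symmetric])
        next
          fix a x assume a: "a \<in> I" and x: "x \<in> carrier R"
          then have aR: "a \<in> carrier R" and aJ: "monom a \<one>\<^bsub>G\<^esub> \<in> J" by (auto simp: I_def)
          have "monom x \<one>\<^bsub>G\<^esub> \<otimes>\<^bsub>S\<^esub> monom a \<one>\<^bsub>G\<^esub> = monom (x \<otimes> a) \<one>\<^bsub>G\<^esub>"
            using mono_mult[OF x aR G.one_closed G.one_closed] aR by simp
          moreover have "monom x \<one>\<^bsub>G\<^esub> \<otimes>\<^bsub>S\<^esub> monom a \<one>\<^bsub>G\<^esub> \<in> J" by (rule JI.I_l_closed[OF aJ mono_closed[OF x]])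
          ultimately show "x \<otimes> a \<in> I" unfolding I_def using x aR by simp
          have "monom a \<one>\<^bsub>G\<^esub> \<otimes>\<^bsub>S\<^esub> monom x \<one>\<^bsub>G\<^esub> = monom (a \<otimes> x) \<one>\<^bsub>G\<^esub>"
            using mono_mult[OF aR x G.one_closed G.one_closed] x by simp
          moreover have "monom a \<one>\<^bsub>G\<^esub> \<otimes>\<^bsub>S\<^esub> monom x \<one>\<^bsub>G\<^esub> \<in> J" by (rule JI.I_r_closed[OF aJ mono_closed[OF x]])
          ultimately show "a \<otimes> x \<in> I" unfolding I_def using x aR by simp
        qed
        have GI: "G_invariant_ideal G R \<alpha> I" unfolding G_invariant_ideal_def
        proof (intro conjI I ballI subsetI)
          fix g t assume g: "g \<in> carrier G" and "t \<in> \<alpha> g ` I"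
          then obtain s where s: "s \<in> I" and ts: "t = \<alpha> g s" by blast
          then have sR: "s \<in> carrier R" and sJ: "monom s \<one>\<^bsub>G\<^esub> \<in> J" by (auto simp: I_def)
          have "monom \<one> g \<otimes>\<^bsub>S\<^esub> monom s \<one>\<^bsub>G\<^esub> = monom (\<alpha> g s) g"
            using mono_mult[OF R.one_closed sR g G.one_closed] g sR by simp
          then have "(monom \<one> g \<otimes>\<^bsub>S\<^esub> monom s \<one>\<^bsub>G\<^esub>) \<otimes>\<^bsub>S\<^esub> monom \<one> (inv\<^bsub>G\<^esub> g) = monom (\<alpha> g s) \<one>\<^bsub>G\<^esub>"
            using mono_mult[OF _ R.one_closed g, of "\<alpha> g s" "inv\<^bsub>G\<^esub> g"] g sR by (simp add: G.r_inv)
          moreover have "(monom \<one> g \<otimes>\<^bsub>S\<^esub> monom s \<one>\<^bsub>G\<^esub>) \<otimes>\<^bsub>S\<^esub> monom \<one> (inv\<^bsub>G\<^esub> g) \<in> J"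
            using JI.I_l_closed[OF sJ] JI.I_r_closed by simp
          ultimately show "t \<in> I" unfolding I_def ts using g sR by simp
        qed
        have "I \<noteq> {\<zero>}" using r by (auto simp: I_def)
        then have "I = carrier R" using Gids[OF GI] by blast
        then have "\<one>\<^bsub>S\<^esub> \<in> J" using S_one_mono by (auto simp: I_def)
        then have "J = carrier S" using JI.one_imp_carrier by blast
        with Jnz show False by simp
      qed
    qed
  qed
qed

end

theorem theorem2p8:
  fixes R :: "('a, 'b) ring_scheme" and G :: "('g, 'c) monoid_scheme"
    and \<alpha> :: "'g \<Rightarrow> 'a \<Rightarrow> 'a"
  assumes "von_neumann_regular R"
    and "group G"
    and "ring_action G R \<alpha>"
    and "\<forall>g \<in> carrier G. corner_inner R (\<alpha> g) \<longrightarrow> g = \<one>\<^bsub>G\<^esub>"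
  shows "simple_ring (skew_group_ring R G \<alpha>) \<longleftrightarrow> G_simple G R \<alpha>"
proof -
  have R: "ring R" and vn: "\<forall>a\<in>carrier R. \<exists>x\<in>carrier R. a \<otimes>\<^bsub>R\<^esub> x \<otimes>\<^bsub>R\<^esub> a = a"
    using assms(1) unfolding von_neumann_regular_def by auto
  have sk: "skew R G \<alpha>" unfolding skew_def skew_axioms_def using R assms(2,3) by blast
  show ?thesis
    using skew.simple_imp_G_simple[OF sk] skew.G_simple_imp_simple[OF sk vn assms(4)] by blast
qed

end
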